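(* Let $(S,\mathcal{S},\mu)$ be a $\sigma$-finite measure space with the approximation-by-averaging property, $q\in[2,\infty)$, $p\in[1,q]$, $X\in L^1(\Omega;L^p(S))$. For all $\ell\in\mathbb{N}$ let $X_\ell\in L^q(\Omega;L^p(S))\cap L^p(S;L^q(\Omega))$, $X_0:=0$, $\xi_\ell:=X_\ell-X_{\ell-1}$, let $\mathcal{C}_\ell$ be the cost of one sample of $\xi_\ell$, and suppose there are $\alpha,\beta,\gamma,C_\alpha,C_\beta,C_\gamma\in(0,\infty)$, $A>1$ and integers $N_\ell\eqsim A^\ell$ with, for all $\ell$, $$\|\mathbb{E}[X]-\mathbb{E}[X_\ell]\|_{L^p(S)}\le C_\alpha N_\ell^{-\alpha},\quad\|X_\ell-\mathbb{E}[X_\ell]-(X_{\ell-1}-\mathbb{E}[X_{\ell-1}])\|_{L^p(S;L^q(\Omega))}\le C_\beta N_\ell^{-\beta},\quad\mathcal{C}_\ell\le C_\gamma N_\ell^\gamma.$$ For each $\ell$ let $(\xi_{\ell,j})_j$ be independent copies of $\xi_\ell$. Then for every $\epsilon\in(0,1/2]$ there exist $L,M_1,\dots,M_L\in\mathbb{N}$ with $$\Big\|\mathbb{E}[X]-\sum_{\ell=1}^L\frac1{M_\ell}\sum_{j=1}^{M_\ell}\xi_{\ell,j}\Big\|_{L^q(\Omega;L^p(S))}<\epsilon$$ at cost $\sum_\ell M_\ell\mathcal{C}_\ell\lesssim\epsilon^{-\gamma/\alpha}+\epsilon^{-2}$ if $\beta>\gamma/2$; $\lesssim\epsilon^{-\gamma/\alpha}+\epsilon^{-2}|\log_A\epsilon|^3$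 if $\beta=\gamma/2$; $\lesssim\epsilon^{-\gamma/\alpha}+\epsilon^{-2-\frac{\gamma-2\beta}{\alpha}}$ if $\beta<\gamma/2$ (implicit constants independent of $\epsilon$).
   Context: Approximation-by-averaging property: for every $n$ there is a finite or countable family $\{B^n_\kappa\}$ of pairwise disjoint measurable sets of positive finite $\mu$-measure such that for every Banach $E$, $p\in[1,\infty)$, $f\in L^p(S;E)$, $\sum_\kappa\mathbf{1}_{B^n_\kappa}\mu(B^n_\kappa)^{-1}\int_{B^n_\kappa}f\,d\mu\to f$ in $L^p(S;E)$. $L^p(S;L^q(\Omega))$-norms of $L^p(S)$-valued random variables are taken for their jointly measurable versions: $(\int_S(\mathbb{E}|\tilde\xi(s,\cdot)|^q)^{p/q}d\mu)^{1/p}$. *)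

theory Defs
  imports "HOL-Probability.Probability"
begin

(* Power of an extended nonnegative real; only used with positive exponents r > 0,
   where it agrees with the usual convention infinity^r = infinity. *)
definition epowr :: "ennreal \<Rightarrow> real \<Rightarrow> ennreal" where
  "epowr x r = (if x = \<top> then \<top> else ennreal (enn2real x powr r))"

definition Lp_norm :: "'s measure \<Rightarrow> real \<Rightarrow> ('s \<Rightarrow> real) \<Rightarrow> ennreal" where
  "Lp_norm S p f = epowr (\<integral>\<^sup>+ s. ennreal (\<bar>f s\<bar> powr p) \<partial>S) (1 / p)"

definition Lqp_norm :: "'w measure \<Rightarrow> 's measure \<Rightarrow> real \<Rightarrow> real \<Rightarrow> ('w \<Rightarrow> 's \<Rightarrow> real) \<Rightarrow> ennreal" where
  "Lqp_norm P S q p Y =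
     epowr (\<integral>\<^sup>+ \<omega>. epowr (\<integral>\<^sup>+ s. ennreal (\<bar>Y \<omega> s\<bar> powr p) \<partial>S) (q / p) \<partial>P) (1 / q)"

definition Lpq_norm :: "'w measure \<Rightarrow> 's measure \<Rightarrow> real \<Rightarrow> real \<Rightarrow> ('w \<Rightarrow> 's \<Rightarrow> real) \<Rightarrow> ennreal" where
  "Lpq_norm P S p q Y =
     epowr (\<integral>\<^sup>+ s. epowr (\<integral>\<^sup>+ \<omega>. ennreal (\<bar>Y \<omega> s\<bar> powr q) \<partial>P) (p / q) \<partial>S) (1 / p)"

definition jointly_measurable :: "'w measure \<Rightarrow> 's measure \<Rightarrow> ('w \<Rightarrow> 's \<Rightarrow> real) \<Rightarrow> bool" where
  "jointly_measurable P S Y \<longleftrightarrow> (\<lambda>(\<omega>, s). Y \<omega> s) \<in> borel_measurable (P \<Otimes>\<^sub>M S)"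

(* E[Y] as an element of L^p(S), via the jointly measurable version: s |-> E[Y(.,s)] *)
definition expec :: "'w measure \<Rightarrow> ('w \<Rightarrow> 's \<Rightarrow> real) \<Rightarrow> 's \<Rightarrow> real" where
  "expec P Y = (\<lambda>s. \<integral>\<omega>. Y \<omega> s \<partial>P)"

(* law of Y as a random function on space S (product / cylinder sigma-algebra) *)
definition law :: "'w measure \<Rightarrow> 's measure \<Rightarrow> ('w \<Rightarrow> 's \<Rightarrow> real) \<Rightarrow> ('s \<Rightarrow> real) measure" where
  "law P S Y = distr P (PiM (space S) (\<lambda>_. borel)) (\<lambda>\<omega>. restrict (Y \<omega>) (space S))"

definition avg_op :: "'s measure \<Rightarrow> nat set \<Rightarrow> (nat \<Rightarrow> 's set) \<Rightarrow> ('s \<Rightarrow> real) \<Rightarrow> 's \<Rightarrow> real" where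
  "avg_op S K B f = (\<lambda>s. \<Sum>\<^sub>\<infinity>\<kappa>\<in>K. indicator (B \<kappa>) s *
       (set_lebesgue_integral S (B \<kappa>) f / measure S (B \<kappa>)))"

(* approximation-by-averaging property (tested on scalar-valued f) *)
definition approx_by_averaging :: "'s measure \<Rightarrow> bool" where
  "approx_by_averaging S \<longleftrightarrow>
    (\<exists>K :: nat \<Rightarrow> nat set. \<exists>B :: nat \<Rightarrow> nat \<Rightarrow> 's set.
       (\<forall>n. disjoint_family_on (B n) (K n) \<and>
            (\<forall>\<kappa>\<in>K n. B n \<kappa> \<in> sets S \<and> 0 < emeasure S (B n \<kappa>) \<and> emeasure S (B n \<kappa>) < \<infinity>)) \<and>
       (\<forall>p::real. \<forall>f. 1 \<le> p \<longrightarrow> f \<in> borel_measurable S \<longrightarrow> Lp_norm S p f < \<infinity> \<longrightarrow>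
          ((\<lambda>n. Lp_norm S p (\<lambda>s. avg_op S (K n) (B n) f s - f s)) \<longlonglongrightarrow> 0)))"

end

theory Submission
  imports Defs
begin

lemma epowr_top[simp]: "epowr \<top> r = \<top>" by (simp add: epowr_def)

lemma epowr_ennreal: "0 \<le> x \<Longrightarrow> epowr (ennreal x) r = ennreal (x powr r)"
  by (simp add: epowr_def)

lemma epowr_zero[simp]: "r \<noteq> 0 \<Longrightarrow> epowr 0 r = 0"
  by (simp add: epowr_def)

lemma measurable_epowr[measurable]:
  fixes r :: real
  assumes "f \<in> borel_measurable M"
  shows "(\<lambda>x. epowr (f x) r) \<in> borel_measurable M"
  unfolding epowr_def using assms by measurable

lemma epowr_mono: "x \<le> y \<Longrightarrow> 0 \<le> r \<Longrightarrow> epowr x r \<le> epowr y r"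
  by (cases x; cases y) (auto simp: epowr_def top_unique intro!: ennreal_leI powr_mono2)

lemma epowr_eq_0_iff: "r > 0 \<Longrightarrow> epowr x r = 0 \<longleftrightarrow> x = 0"
  by (cases x) (auto simp: epowr_def)

lemma epowr_eq_top_iff: "epowr x r = \<top> \<longleftrightarrow> x = \<top>"
  by (cases x) (auto simp: epowr_def)

lemma epowr_epowr: "0 < a \<Longrightarrow> 0 < b \<Longrightarrow> epowr (epowr x a) b = epowr x (a * b)"
  by (cases x) (auto simp: epowr_def powr_powr)

lemma epowr_1[simp]: "epowr x 1 = x"
  by (cases x) (auto simp: epowr_def)

lemma epowr_mult_ennreal: "0 \<le> t \<Longrightarrow> 0 < r \<Longrightarrow> epowr (ennreal t * x) r = ennreal (t powr r) * epowr x r"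
proof (cases x)
  case (real y)
  assume "0 \<le> t" "0 < r"
  have y: "0 \<le> y" by fact
  have "ennreal t * x = ennreal (t * y)" using real \<open>0 \<le> t\<close> y by (simp add: ennreal_mult)
  then have "epowr (ennreal t * x) r = ennreal ((t * y) powr r)"
    using \<open>0 \<le> t\<close> y by (simp add: epowr_ennreal)
  also have "\<dots> = ennreal (t powr r) * ennreal (y powr r)"
    using \<open>0 \<le> t\<close> y by (simp add: powr_mult ennreal_mult)
  finally show ?thesis using real y by (simp add: epowr_ennreal)
next
  case top
  assume "0 \<le> t" "0 < r"
  then show ?thesis using top
    by (cases "t = 0") (auto simp: epowr_def ennreal_mult_top)
qed

lemma epowr_mult: "0 < r \<Longrightarrow> epowr (x * y) r = epowr x r * epowr y r"
proof (cases x)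
  case (real a)
  assume r: "0 < r"
  then show ?thesis using real epowr_mult_ennreal[of a r y] by (simp add: epowr_ennreal)
next
  case top
  assume r: "0 < r"
  then show ?thesis using top
    by (cases "y = 0") (auto simp: ennreal_mult_top epowr_eq_0_iff epowr_eq_top_iff)
qed

lemma epowr_add_exp: "0 < a \<Longrightarrow> 0 < b \<Longrightarrow> epowr x (a + b) = epowr x a * epowr x b"
  by (cases x) (auto simp: epowr_def powr_add ennreal_mult)

lemma epowr_of_nat: "epowr (of_nat n) r = ennreal (real n powr r)"
  using epowr_ennreal[of "real n" r] by (simp add: ennreal_of_nat_eq_real_of_nat)

lemma epowr_less_top: "x < \<top> \<Longrightarrow> epowr x r < \<top>"
  by (cases x) (auto simp: epowr_def)

lemma epowr_strict_mono: "x < y \<Longrightarrow> 0 < r \<Longrightarrow> epowr x r < epowr y r"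
  by (cases x; cases y) (auto simp: epowr_def ennreal_less_iff powr_less_mono2)

lemma epowr_le_iff: "0 < r \<Longrightarrow> epowr x r \<le> epowr y r \<longleftrightarrow> x \<le> y"
proof
  assume r: "0 < r" and "epowr x r \<le> epowr y r"
  then show "x \<le> y" using epowr_strict_mono[of y x r] by (meson not_le)
next
  assume "0 < r" "x \<le> y"
  then show "epowr x r \<le> epowr y r" by (simp add: epowr_mono)
qed

definition enorm :: "'a measure \<Rightarrow> real \<Rightarrow> ('a \<Rightarrow> ennreal) \<Rightarrow> ennreal" where
  "enorm M r u = epowr (\<integral>\<^sup>+ x. epowr (u x) r \<partial>M) (1 / r)"

lemma Lp_norm_enorm: "Lp_norm S p f = enorm S p (\<lambda>s. ennreal \<bar>f s\<bar>)"
  by (simp add: Lp_norm_def enorm_def epowr_ennreal)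

lemma Lqp_norm_enorm:
  assumes "0 < p" "0 < q"
  shows "Lqp_norm P S q p Y = enorm P q (\<lambda>\<omega>. Lp_norm S p (Y \<omega>))"
  using assms by (simp add: Lqp_norm_def enorm_def Lp_norm_def epowr_epowr)

lemma Lpq_norm_enorm:
  assumes "0 < p" "0 < q"
  shows "Lpq_norm P S p q Y = enorm S p (\<lambda>s. enorm P q (\<lambda>\<omega>. ennreal \<bar>Y \<omega> s\<bar>))"
  using assms by (simp add: Lpq_norm_def enorm_def epowr_epowr epowr_ennreal)

lemma enorm_mono_AE:
  assumes "AE x in M. u x \<le> v x" "0 < r"
  shows "enorm M r u \<le> enorm M r v"
  unfolding enorm_def using assms
  by (intro epowr_mono nn_integral_mono_AE) (auto elim!: eventually_mono intro: epowr_mono)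

lemma enorm_cong_AE:
  assumes "AE x in M. u x = v x"
  shows "enorm M r u = enorm M r v"
  unfolding enorm_def using assms
  by (intro arg_cong[where f="\<lambda>x. epowr x _"] nn_integral_cong_AE) (auto elim!: eventually_mono)

lemma enorm_cmult:
  assumes "0 \<le> t" "0 < r" "u \<in> borel_measurable M"
  shows "enorm M r (\<lambda>x. ennreal t * u x) = ennreal t * enorm M r u"
proof -
  have "enorm M r (\<lambda>x. ennreal t * u x) = epowr (ennreal (t powr r) * \<integral>\<^sup>+ x. epowr (u x) r \<partial>M) (1/r)"
    unfolding enorm_def using assms by (simp add: epowr_mult_ennreal nn_integral_cmult)
  also have "\<dots> = ennreal ((t powr r) powr (1/r)) * enorm M r u"
    using assms by (simp add: epowr_mult_ennreal enorm_def)
  also have "(t powr r) powr (1/r) = t" using assms by (simp add: powr_powr)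
  finally show ?thesis .
qed

lemma (in prob_space) enorm_const:
  assumes "0 < r"
  shows "enorm M r (\<lambda>x. c) = c"
  using assms by (simp add: enorm_def emeasure_space_1 epowr_epowr)

lemma enorm_zero_AE:
  assumes "enorm M r u = 0" "0 < r" "u \<in> borel_measurable M"
  shows "AE x in M. u x = 0"
proof -
  have "(\<integral>\<^sup>+ x. epowr (u x) r \<partial>M) = 0"
    using assms by (simp add: enorm_def epowr_eq_0_iff)
  then have "AE x in M. epowr (u x) r = 0"
    using assms by (subst (asm) nn_integral_0_iff_AE) auto
  then show ?thesis using assms by (auto simp: epowr_eq_0_iff elim!: eventually_mono)
qed

lemma enorm_finite_AE:
  assumes "enorm M r u < \<top>" "u \<in> borel_measurable M"
  shows "AE x in M. u x < \<top>"
proof -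
  have "(\<integral>\<^sup>+ x. epowr (u x) r \<partial>M) < \<top>"
    using assms by (metis enorm_def epowr_eq_top_iff less_top)
  from finite_nn_integral_imp_ae_finite[of "\<lambda>x. epowr (u x) r" M] this assms
  show ?thesis by (auto elim!: eventually_mono) (metis epowr_eq_top_iff less_top)
qed

lemma powr_split1: "0 < (A::real) \<Longrightarrow> A powr r = A * A powr (r - 1)"
  using powr_diff[of A r 1] by simp

lemma young_scaled:
  fixes A B a b r s :: real
  assumes A: "0 < A" and B: "0 < B" and a: "0 \<le> a" and b: "0 \<le> b" and r: "1 < r" and s: "s = r / (r - 1)"
  shows "a * b \<le> B / (r * A powr (r - 1)) * a powr r + A / (s * B powr (s - 1)) * b powr s"
proof -
  have s1: "1 < s" using r unfolding s by (auto simp: less_divide_eq)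
  have rs: "1 / r + 1 / s = 1"
  proof -
    have "1 / s = (r - 1) / r" unfolding s by simp
    then show ?thesis using r by (simp add: field_simps)
  qed
  have "(a / A) * (b / B) \<le> (a / A) powr r / r + (b / B) powr s / s"
    using Youngs_inequality[of r s "a / A" "b / B"] r s1 rs A B a b by simp
  then have "A * B * ((a / A) * (b / B)) \<le> A * B * ((a / A) powr r / r + (b / B) powr s / s)"
    using A B by (intro mult_left_mono) auto
  also have "A * B * ((a / A) * (b / B)) = a * b" using A B by simp
  also have "(a / A) powr r = a powr r / A powr r" using a A by (simp add: powr_divide)
  also have "(b / B) powr s = b powr s / B powr s" using b B by (simp add: powr_divide)
  also have "A powr r = A * A powr (r - 1)" using A by (rule powr_split1)
  also have "B powr s = B * B powr (s - 1)" using B by (rule powr_split1)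
  also have "A * B * (a powr r / (A * A powr (r - 1)) / r + b powr s / (B * B powr (s - 1)) / s)
     = B / (r * A powr (r - 1)) * a powr r + A / (s * B powr (s - 1)) * b powr s"
    using A B r s1 by (simp add: field_simps)
  finally show ?thesis .
qed

lemma holder_enorm:
  assumes r: "1 < r" and u: "u \<in> borel_measurable M" and v: "v \<in> borel_measurable M"
  shows "(\<integral>\<^sup>+x. u x * v x \<partial>M) \<le> enorm M r u * enorm M (r / (r - 1)) v"
proof -
  define s where "s = r / (r - 1)"
  have s1: "1 < s" using r unfolding s_def by (auto simp: less_divide_eq)
  have uv: "(\<lambda>x. u x * v x) \<in> borel_measurable M" using u v by measurable
  have rs: "1 / r + 1 / s = 1"
  proof -
    have "1 / s = (r - 1) / r" unfolding s_def by simp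
    then show ?thesis using r by (simp add: field_simps)
  qed
  consider "enorm M r u = 0" | "enorm M s v = 0" | "enorm M r u = \<top> \<or> enorm M s v = \<top>"
    | "0 < enorm M r u" "enorm M r u < \<top>" "0 < enorm M s v" "enorm M s v < \<top>"
    by (metis not_gr_zero top.not_eq_extremum)
  then show ?thesis
  proof cases
    case 1
    then have "AE x in M. u x = 0" using enorm_zero_AE[OF _ _ u] r by auto
    then have "(\<integral>\<^sup>+x. u x * v x \<partial>M) = 0"
      by (subst nn_integral_0_iff_AE) (auto simp: uv elim!: eventually_mono)
    then show ?thesis by simp
  next
    case 2
    then have "AE x in M. v x = 0" using enorm_zero_AE[OF _ _ v] s1 by auto
    then have "(\<integral>\<^sup>+x. u x * v x \<partial>M) = 0"
      by (subst nn_integral_0_iff_AE) (auto simp: uv elim!: eventually_mono)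
    then show ?thesis by simp
  next
    case 3
    show ?thesis
    proof (cases "enorm M r u = 0 \<or> enorm M s v = 0")
      case True
      then show ?thesis
      proof
        assume "enorm M r u = 0"
        then have "AE x in M. u x = 0" using enorm_zero_AE[OF _ _ u] r by auto
        then have "(\<integral>\<^sup>+x. u x * v x \<partial>M) = 0"
          by (subst nn_integral_0_iff_AE) (auto simp: uv elim!: eventually_mono)
        then show ?thesis by simp
      next
        assume "enorm M s v = 0"
        then have "AE x in M. v x = 0" using enorm_zero_AE[OF _ _ v] s1 by auto
        then have "(\<integral>\<^sup>+x. u x * v x \<partial>M) = 0"
          by (subst nn_integral_0_iff_AE) (auto simp: uv elim!: eventually_mono)
        then show ?thesis by simp
      qed
    next
      case False
      then have "enorm M r u * enorm M s v = \<top>" using 3 by (auto simp: ennreal_mult_eq_top_iff)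
      then show ?thesis by (simp add: s_def)
    qed
  next
    case 4
    obtain A where A: "enorm M r u = ennreal A" "0 < A"
      using 4 by (cases "enorm M r u") (auto simp: ennreal_less_zero_iff)
    obtain B where B: "enorm M s v = ennreal B" "0 < B"
      using 4 by (cases "enorm M s v") (auto simp: ennreal_less_zero_iff)
    have Iu: "(\<integral>\<^sup>+x. epowr (u x) r \<partial>M) = ennreal (A powr r)"
    proof -
      have "(\<integral>\<^sup>+x. epowr (u x) r \<partial>M) = epowr (enorm M r u) r"
        using r by (simp add: enorm_def epowr_epowr)
      then show ?thesis using A by (simp add: epowr_ennreal)
    qed
    have Iv: "(\<integral>\<^sup>+x. epowr (v x) s \<partial>M) = ennreal (B powr s)"
    proof -
      have "(\<integral>\<^sup>+x. epowr (v x) s \<partial>M) = epowr (enorm M s v) s"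
        using s1 by (simp add: enorm_def epowr_epowr)
      then show ?thesis using B by (simp add: epowr_ennreal)
    qed
    define c1 where "c1 = B / (r * A powr (r - 1))"
    define c2 where "c2 = A / (s * B powr (s - 1))"
    have c1: "0 \<le> c1" and c2: "0 \<le> c2" using A B r s1 by (auto simp: c1_def c2_def)
    have fu: "AE x in M. u x < \<top>" using enorm_finite_AE[OF _ u] 4 by auto
    have fv: "AE x in M. v x < \<top>" using enorm_finite_AE[OF _ v] 4 by auto
    have pw: "AE x in M. u x * v x \<le> ennreal c1 * epowr (u x) r + ennreal c2 * epowr (v x) s"
      using fu fv
    proof eventually_elim
      case (elim x)
      obtain a where a: "u x = ennreal a" "0 \<le> a" using elim by (cases "u x") auto
      obtain b where b: "v x = ennreal b" "0 \<le> b" using elim by (cases "v x") auto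
      have "a * b \<le> c1 * a powr r + c2 * b powr s"
        using young_scaled[OF A(2) B(2) a(2) b(2) r s_def] by (simp add: c1_def c2_def)
      then have "ennreal (a * b) \<le> ennreal (c1 * a powr r + c2 * b powr s)"
        by (rule ennreal_leI)
      then show ?case using a b c1 c2
        by (simp add: epowr_ennreal ennreal_mult ennreal_plus[symmetric])
    qed
    have "(\<integral>\<^sup>+x. u x * v x \<partial>M) \<le> (\<integral>\<^sup>+x. ennreal c1 * epowr (u x) r + ennreal c2 * epowr (v x) s \<partial>M)"
      by (rule nn_integral_mono_AE[OF pw])
    also have "\<dots> = ennreal c1 * (\<integral>\<^sup>+x. epowr (u x) r \<partial>M) + ennreal c2 * (\<integral>\<^sup>+x. epowr (v x) s \<partial>M)"
      using u v by (simp add: nn_integral_add nn_integral_cmult)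
    also have "\<dots> = ennreal (c1 * A powr r + c2 * B powr s)"
      using c1 c2 Iu Iv by (simp add: ennreal_mult ennreal_plus[symmetric])
    also have "c1 * A powr r + c2 * B powr s = A * B"
    proof -
      have "A powr r = A * A powr (r - 1)" using A(2) by (rule powr_split1)
      moreover have "B powr s = B * B powr (s - 1)" using B(2) by (rule powr_split1)
      ultimately have "c1 * A powr r + c2 * B powr s = A * B * (1 / r + 1 / s)"
        using A B r s1 by (simp add: c1_def c2_def field_simps)
      then show ?thesis using rs by simp
    qed
    also have "ennreal (A * B) = enorm M r u * enorm M (r / (r - 1)) v"
      using A B by (simp add: s_def[symmetric] ennreal_mult)
    finally show ?thesis .
  qed
qed

lemma mink_pt_pos:
  fixes x y A B r :: real
  assumes x: "0 < x" and y: "0 < y" and A: "0 < A" and B: "0 < B" and r: "1 \<le> r"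
  shows "(x + y) powr r \<le> (A + B) powr (r - 1) * (A powr (1 - r) * x powr r + B powr (1 - r) * y powr r)"
proof -
  define t where "t = B / (A + B)"
  have t0: "0 \<le> t" "t \<le> 1" using A B by (auto simp: t_def)
  have 1: "1 - t = A / (A + B)" using A B by (simp add: t_def field_simps)
  have "((1 - t) *\<^sub>R (x / A) + t *\<^sub>R (y / B)) powr r \<le> (1 - t) * (x / A) powr r + t * (y / B) powr r"
    using convex_onD[OF powr_convex[OF r], of t "x / A" "y / B"] t0 x y A B by auto
  also have "(1 - t) *\<^sub>R (x / A) + t *\<^sub>R (y / B) = (x + y) / (A + B)"
  proof -
    have "(1 - t) *\<^sub>R (x / A) = x / (A + B)" using A B by (simp add: 1)
    moreover have "t *\<^sub>R (y / B) = y / (A + B)" using A B by (simp add: t_def)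
    ultimately show ?thesis by (simp add: add_divide_distrib)
  qed
  also have "(1 - t) * (x / A) powr r + t * (y / B) powr r = A / (A + B) * (x powr r / A powr r) + B / (A + B) * (y powr r / B powr r)"
  proof -
    have d1: "(x / A) powr r = x powr r / A powr r" using x A by (simp add: powr_divide)
    have d2: "(y / B) powr r = y powr r / B powr r" using y B by (simp add: powr_divide)
    show ?thesis unfolding 1 d1 d2 by (simp add: t_def)
  qed
  finally have *: "((x + y) / (A + B)) powr r \<le> A / (A + B) * (x powr r / A powr r) + B / (A + B) * (y powr r / B powr r)" .
  have "(x + y) powr r = (A + B) powr r * ((x + y) / (A + B)) powr r"
    using x y A B by (simp add: powr_divide)
  also have "\<dots> \<le> (A + B) powr r * (A / (A + B) * (x powr r / A powr r) + B / (A + B) * (y powr r / B powr r))"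
    using * by (intro mult_left_mono) auto
  also have "\<dots> = (A + B) powr (r - 1) * (A powr (1 - r) * x powr r + B powr (1 - r) * y powr r)"
  proof -
    define P where "P = (A + B) powr (r - 1)"
    have e1: "A powr (1 - r) = A / A powr r" using powr_diff[of A 1 r] A by simp
    have e2: "B powr (1 - r) = B / B powr r" using powr_diff[of B 1 r] B by simp
    have e3: "(A + B) powr r = (A + B) * P" unfolding P_def using A B by (intro powr_split1) auto
    have p: "0 < A powr r" "0 < B powr r" "0 < A + B" using A B by auto
    have gen: "\<And>S P u v. S \<noteq> 0 \<Longrightarrow> S * P * (A / S * u + B / S * v) = P * (A * u + B * v)"
      by (simp add: field_simps)
    show ?thesis unfolding P_def[symmetric] e1 e2 e3
      using gen[of "A + B" P "x powr r / A powr r" "y powr r / B powr r"] p by simp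
  qed
  finally show ?thesis .
qed

lemma mink_pt:
  fixes x y A B r :: real
  assumes x: "0 \<le> x" and y: "0 \<le> y" and A: "0 < A" and B: "0 < B" and r: "1 \<le> r"
  shows "(x + y) powr r \<le> (A + B) powr (r - 1) * (A powr (1 - r) * x powr r + B powr (1 - r) * y powr r)"
proof -
  have key: "1 \<le> (A + B) powr (r - 1) * C powr (1 - r)" if "C = A \<or> C = B" for C
  proof -
    have C: "0 < C" "C \<le> A + B" using that A B by auto
    have "C powr (r - 1) \<le> (A + B) powr (r - 1)" using C r by (intro powr_mono2) auto
    then have "C powr (1 - r) * C powr (r - 1) \<le> C powr (1 - r) * (A + B) powr (r - 1)"
      by (intro mult_left_mono) auto
    moreover have "C powr (1 - r) * C powr (r - 1) = 1" using C by (simp add: powr_add[symmetric])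
    ultimately show ?thesis by (simp add: mult.commute)
  qed
  have nn: "0 \<le> (A + B) powr (r - 1) * (A powr (1 - r) * x powr r)" "0 \<le> (A + B) powr (r - 1) * (B powr (1 - r) * y powr r)"
    by auto
  consider "x = 0" | "y = 0" | "0 < x" "0 < y" using x y by linarith
  then show ?thesis
  proof cases
    case 1
    have "1 * y powr r \<le> ((A + B) powr (r - 1) * B powr (1 - r)) * y powr r"
      by (rule mult_right_mono) (use key[of B] in auto)
    then show ?thesis using 1 r nn by (simp add: algebra_simps)
  next
    case 2
    have "1 * x powr r \<le> ((A + B) powr (r - 1) * A powr (1 - r)) * x powr r"
      by (rule mult_right_mono) (use key[of A] in auto)
    then show ?thesis using 2 r nn by (simp add: algebra_simps)
  next
    case 3
    then show ?thesis using mink_pt_pos A B r by blast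
  qed
qed

lemma enorm_epowr_eq:
  assumes "0 < r"
  shows "(\<integral>\<^sup>+x. epowr (u x) r \<partial>M) = epowr (enorm M r u) r"
  using assms by (simp add: enorm_def epowr_epowr)

lemma minkowski_enorm:
  assumes r: "1 \<le> r" and u: "u \<in> borel_measurable M" and v: "v \<in> borel_measurable M"
  shows "enorm M r (\<lambda>x. u x + v x) \<le> enorm M r u + enorm M r v"
proof -
  consider "enorm M r u = \<top> \<or> enorm M r v = \<top>" | "enorm M r u = 0" | "enorm M r v = 0"
    | "0 < enorm M r u" "enorm M r u < \<top>" "0 < enorm M r v" "enorm M r v < \<top>"
    by (metis not_gr_zero top.not_eq_extremum)
  then show ?thesis
  proof cases
    case 1 then show ?thesis by auto
  next
    case 2
    then have "AE x in M. u x = 0" using enorm_zero_AE[OF _ _ u] r by auto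
    then have "enorm M r (\<lambda>x. u x + v x) = enorm M r v"
      by (intro enorm_cong_AE) (auto elim!: eventually_mono)
    then show ?thesis by simp
  next
    case 3
    then have "AE x in M. v x = 0" using enorm_zero_AE[OF _ _ v] r by auto
    then have "enorm M r (\<lambda>x. u x + v x) = enorm M r u"
      by (intro enorm_cong_AE) (auto elim!: eventually_mono)
    then show ?thesis by simp
  next
    case 4
    obtain A where A: "enorm M r u = ennreal A" "0 < A"
      using 4 by (cases "enorm M r u") (auto simp: ennreal_less_zero_iff)
    obtain B where B: "enorm M r v = ennreal B" "0 < B"
      using 4 by (cases "enorm M r v") (auto simp: ennreal_less_zero_iff)
    have Iu: "(\<integral>\<^sup>+x. epowr (u x) r \<partial>M) = ennreal (A powr r)"
      using r A by (simp add: enorm_epowr_eq epowr_ennreal)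
    have Iv: "(\<integral>\<^sup>+x. epowr (v x) r \<partial>M) = ennreal (B powr r)"
      using r B by (simp add: enorm_epowr_eq epowr_ennreal)
    define C where "C = (A + B) powr (r - 1)"
    define c1 where "c1 = A powr (1 - r)"
    define c2 where "c2 = B powr (1 - r)"
    have C0: "0 \<le> C" and c10: "0 \<le> c1" and c20: "0 \<le> c2" by (auto simp: C_def c1_def c2_def)
    have fu: "AE x in M. u x < \<top>" using enorm_finite_AE[OF _ u] 4 by auto
    have fv: "AE x in M. v x < \<top>" using enorm_finite_AE[OF _ v] 4 by auto
    have pw: "AE x in M. epowr (u x + v x) r \<le> ennreal C * (ennreal c1 * epowr (u x) r + ennreal c2 * epowr (v x) r)"
      using fu fv
    proof eventually_elim
      case (elim x)
      obtain a where a: "u x = ennreal a" "0 \<le> a" using elim by (cases "u x") auto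
      obtain b where b: "v x = ennreal b" "0 \<le> b" using elim by (cases "v x") auto
      have "(a + b) powr r \<le> C * (c1 * a powr r + c2 * b powr r)"
        using mink_pt[OF a(2) b(2) A(2) B(2) r] by (simp add: C_def c1_def c2_def)
      then have "ennreal ((a + b) powr r) \<le> ennreal (C * (c1 * a powr r + c2 * b powr r))"
        by (rule ennreal_leI)
      moreover have "\<dots> = ennreal C * (ennreal c1 * ennreal (a powr r) + ennreal c2 * ennreal (b powr r))"
        using C0 c10 c20 by (simp add: ennreal_mult ennreal_plus)
      ultimately have "ennreal ((a + b) powr r) \<le> ennreal C * (ennreal c1 * ennreal (a powr r) + ennreal c2 * ennreal (b powr r))" by simp
      moreover have "epowr (u x + v x) r = ennreal ((a + b) powr r)"
        using epowr_ennreal[of "a + b" r] a b by (simp add: ennreal_plus)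
      ultimately show ?case using a b by (simp add: epowr_ennreal)
    qed
    have "(\<integral>\<^sup>+x. epowr (u x + v x) r \<partial>M) \<le> (\<integral>\<^sup>+x. ennreal C * (ennreal c1 * epowr (u x) r + ennreal c2 * epowr (v x) r) \<partial>M)"
      by (rule nn_integral_mono_AE[OF pw])
    also have "\<dots> = ennreal C * (ennreal c1 * (\<integral>\<^sup>+x. epowr (u x) r \<partial>M) + ennreal c2 * (\<integral>\<^sup>+x. epowr (v x) r \<partial>M))"
      using u v by (simp add: nn_integral_add nn_integral_cmult)
    also have "\<dots> = ennreal (C * (c1 * A powr r + c2 * B powr r))"
      using Iu Iv C0 c10 c20 by (simp add: ennreal_mult ennreal_plus)
    also have "C * (c1 * A powr r + c2 * B powr r) = (A + B) powr r"
    proof -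
      have "c1 * A powr r = A" using A(2) by (simp add: c1_def powr_add[symmetric])
      moreover have "c2 * B powr r = B" using B(2) by (simp add: c2_def powr_add[symmetric])
      moreover have "(A + B) powr (r - 1) * (A + B) = (A + B) powr r"
        using A(2) B(2) powr_split1[of "A + B" r] by simp
      ultimately show ?thesis unfolding C_def by (simp add: distrib_left)
    qed
    finally have I: "(\<integral>\<^sup>+x. epowr (u x + v x) r \<partial>M) \<le> ennreal ((A + B) powr r)" .
    have "enorm M r (\<lambda>x. u x + v x) \<le> epowr (ennreal ((A + B) powr r)) (1 / r)"
      unfolding enorm_def using r by (intro epowr_mono I) auto
    also have "\<dots> = ennreal (A + B)" using A B r by (simp add: epowr_ennreal powr_powr)
    finally show ?thesis using A B by (simp add: ennreal_plus)
  qed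
qed

lemma minkowski_enorm_sum:
  assumes r: "1 \<le> r" and u: "\<And>i. i \<in> I \<Longrightarrow> u i \<in> borel_measurable M"
  shows "enorm M r (\<lambda>x. \<Sum>i\<in>I. u i x) \<le> (\<Sum>i\<in>I. enorm M r (u i))"
  using u
proof (induction I rule: infinite_finite_induct)
  case (infinite I)
  then show ?case using r by (simp add: enorm_def)
next
  case empty
  then show ?case using r by (simp add: enorm_def)
next
  case (insert i I)
  have "enorm M r (\<lambda>x. \<Sum>i\<in>insert i I. u i x) = enorm M r (\<lambda>x. u i x + (\<Sum>i\<in>I. u i x))"
    using insert by simp
  also have "\<dots> \<le> enorm M r (u i) + enorm M r (\<lambda>x. \<Sum>i\<in>I. u i x)"
    using insert r by (intro minkowski_enorm) auto
  also have "\<dots> \<le> enorm M r (u i) + (\<Sum>i\<in>I. enorm M r (u i))"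
    using insert by (intro add_left_mono) auto
  finally show ?case using insert by simp
qed

lemma SUP_epowr_min:
  assumes r: "1 \<le> r"
  shows "(SUP n. epowr (min x (of_nat n)) r) = epowr x r"
proof (rule antisym)
  show "(SUP n. epowr (min x (of_nat n)) r) \<le> epowr x r"
    using r by (intro SUP_least epowr_mono) auto
next
  show "epowr x r \<le> (SUP n. epowr (min x (of_nat n)) r)"
  proof (cases x)
    case (real a)
    obtain n where n: "a \<le> real n" using real_arch_simple by blast
    have "x \<le> of_nat n" using real n by (simp add: ennreal_of_nat_eq_real_of_nat ennreal_leI)
    then have "min x (of_nat n) = x" by simp
    then show ?thesis by (intro SUP_upper2[of n]) auto
  next
    case top
    have "\<top> = (SUP n. (of_nat n :: ennreal))" by (rule ennreal_SUP_of_nat_eq_top[symmetric])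
    also have "\<dots> \<le> (SUP n. epowr (min x (of_nat n)) r)"
    proof (intro SUP_mono bexI)
      fix n :: nat
      have "real n \<le> real n powr r"
      proof (cases "n = 0")
        case False
        then have "real n powr 1 \<le> real n powr r" using r by (intro powr_mono) auto
        then show ?thesis using False by simp
      qed simp
      then show "(of_nat n :: ennreal) \<le> epowr (min x (of_nat n)) r"
        using top by (simp add: epowr_ennreal ennreal_of_nat_eq_real_of_nat ennreal_leI)
    qed auto
    finally show ?thesis using top by simp
  qed
qed

lemma minkowski_integral:
  assumes P: "finite_measure P" and S: "sigma_finite_measure S" and r: "1 \<le> r"
    and H: "(\<lambda>(\<omega>, s). H \<omega> s) \<in> borel_measurable (P \<Otimes>\<^sub>M S)"
  shows "enorm P r (\<lambda>\<omega>. \<integral>\<^sup>+s. H \<omega> s \<partial>S) \<le> (\<integral>\<^sup>+s. enorm P r (\<lambda>\<omega>. H \<omega> s) \<partial>S)"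
proof -
  interpret P: finite_measure P by fact
  interpret S: sigma_finite_measure S by fact
  have sfP: "sigma_finite_measure P" using P by (rule finite_measure.sigma_finite_measure)
  interpret PS: pair_sigma_finite P S
    using sfP S by (simp add: pair_sigma_finite_def)
  have Hs: "(\<lambda>(s, \<omega>). H \<omega> s) \<in> borel_measurable (S \<Otimes>\<^sub>M P)"
    using measurable_pair_swap[OF H] by simp
  define \<Phi> where "\<Phi> \<omega> = (\<integral>\<^sup>+s. H \<omega> s \<partial>S)" for \<omega>
  have \<Phi>m[measurable]: "\<Phi> \<in> borel_measurable P"
    unfolding \<Phi>_def by (rule S.borel_measurable_nn_integral[OF H])
  have Hm[measurable]: "(\<lambda>x. H (fst x) (snd x)) \<in> borel_measurable (P \<Otimes>\<^sub>M S)"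
    using H by (simp add: case_prod_beta')
  have Hsec: "H \<omega> \<in> borel_measurable S" if "\<omega> \<in> space P" for \<omega>
    using measurable_Pair2[OF H that] by simp
  have Hsec2: "(\<lambda>\<omega>. H \<omega> s) \<in> borel_measurable P" if "s \<in> space S" for s
    using measurable_Pair2[OF Hs that] by simp
  define W where "W = (\<integral>\<^sup>+s. enorm P r (\<lambda>\<omega>. H \<omega> s) \<partial>S)"
  have Wm: "(\<lambda>s. enorm P r (\<lambda>\<omega>. H \<omega> s)) \<in> borel_measurable S"
  proof -
    have "(\<lambda>(s, \<omega>). epowr (H \<omega> s) r) \<in> borel_measurable (S \<Otimes>\<^sub>M P)"
      using Hs by (simp add: case_prod_beta' measurable_epowr)
    from P.borel_measurable_nn_integral[OF this]
    show ?thesis unfolding enorm_def by (intro measurable_epowr) simp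
  qed
  show ?thesis
  proof (cases "r = 1")
    case True
    have "enorm P r \<Phi> = (\<integral>\<^sup>+\<omega>. \<Phi> \<omega> \<partial>P)" using True by (simp add: enorm_def)
    also have "\<dots> = (\<integral>\<^sup>+s. (\<integral>\<^sup>+\<omega>. H \<omega> s \<partial>P) \<partial>S)"
      unfolding \<Phi>_def using PS.Fubini'[OF H] by simp
    also have "\<dots> = W" using True by (simp add: W_def enorm_def)
    finally have "enorm P r \<Phi> = W" .
    moreover have "(\<lambda>\<omega>. \<integral>\<^sup>+s. H \<omega> s \<partial>S) = \<Phi>" by (simp add: \<Phi>_def[abs_def])
    ultimately show ?thesis by (simp add: W_def)
  next
    case False
    then have r1: "1 < r" using r by simp
    show ?thesis
    proof (cases "W = \<top>")
      case True
      then show ?thesis by (simp add: W_def)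
    next
      case False
      then obtain w where w: "W = ennreal w" "0 \<le> w" by (cases W) auto
      define s' where "s' = r / (r - 1)"
      have bound: "(\<integral>\<^sup>+\<omega>. epowr (min (\<Phi> \<omega>) (of_nat n)) r \<partial>P) \<le> ennreal (w powr r)" for n :: nat
      proof -
        define \<Phi>n where "\<Phi>n \<omega> = min (\<Phi> \<omega>) (of_nat n)" for \<omega>
        have \<Phi>nm[measurable]: "\<Phi>n \<in> borel_measurable P" unfolding \<Phi>n_def by measurable
        define I where "I = (\<integral>\<^sup>+\<omega>. epowr (\<Phi>n \<omega>) r \<partial>P)"
        have Ifin: "I < \<top>"
        proof -
          have "I \<le> (\<integral>\<^sup>+\<omega>. ennreal (real n powr r) \<partial>P)"
            unfolding I_def \<Phi>n_def using r
            by (intro nn_integral_mono) (auto simp: epowr_of_nat[symmetric] intro!: epowr_mono)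
          also have "\<dots> = ennreal (real n powr r) * emeasure P (space P)" by simp
          also have "\<dots> < \<top>"
          proof -
            have "emeasure P (space P) < \<top>" using P.emeasure_finite[of "space P"] by (simp add: less_top[symmetric])
            then show ?thesis by (simp add: ennreal_mult_less_top)
          qed
          finally show ?thesis .
        qed
        have step1: "I \<le> (\<integral>\<^sup>+\<omega>. epowr (\<Phi>n \<omega>) (r - 1) * \<Phi> \<omega> \<partial>P)"
          unfolding I_def
        proof (intro nn_integral_mono)
          fix \<omega>
          have "epowr (\<Phi>n \<omega>) r = epowr (\<Phi>n \<omega>) (r - 1) * epowr (\<Phi>n \<omega>) 1"
            using epowr_add_exp[of "r - 1" 1 "\<Phi>n \<omega>"] r1 by simp
          also have "\<dots> \<le> epowr (\<Phi>n \<omega>) (r - 1) * \<Phi> \<omega>"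
            by (intro mult_left_mono) (auto simp: \<Phi>n_def)
          finally show "epowr (\<Phi>n \<omega>) r \<le> epowr (\<Phi>n \<omega>) (r - 1) * \<Phi> \<omega>" .
        qed
        also have "\<dots> = (\<integral>\<^sup>+\<omega>. (\<integral>\<^sup>+s. epowr (\<Phi>n \<omega>) (r - 1) * H \<omega> s \<partial>S) \<partial>P)"
          unfolding \<Phi>_def by (intro nn_integral_cong) (simp add: nn_integral_cmult Hsec)
        also have "\<dots> = (\<integral>\<^sup>+s. (\<integral>\<^sup>+\<omega>. epowr (\<Phi>n \<omega>) (r - 1) * H \<omega> s \<partial>P) \<partial>S)"
        proof -
          have "(\<lambda>(\<omega>, s). epowr (\<Phi>n \<omega>) (r - 1) * H \<omega> s) \<in> borel_measurable (P \<Otimes>\<^sub>M S)"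
            by (simp add: case_prod_beta')
          from PS.Fubini'[OF this] show ?thesis by simp
        qed
        also have "\<dots> \<le> (\<integral>\<^sup>+s. enorm P r (\<lambda>\<omega>. H \<omega> s) * enorm P s' (\<lambda>\<omega>. epowr (\<Phi>n \<omega>) (r - 1)) \<partial>S)"
        proof (intro nn_integral_mono)
          fix s assume s: "s \<in> space S"
          have "(\<integral>\<^sup>+\<omega>. epowr (\<Phi>n \<omega>) (r - 1) * H \<omega> s \<partial>P) = (\<integral>\<^sup>+\<omega>. H \<omega> s * epowr (\<Phi>n \<omega>) (r - 1) \<partial>P)"
            by (simp add: mult.commute)
          also have "\<dots> \<le> enorm P r (\<lambda>\<omega>. H \<omega> s) * enorm P s' (\<lambda>\<omega>. epowr (\<Phi>n \<omega>) (r - 1))"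
            unfolding s'_def by (rule holder_enorm[OF r1 Hsec2[OF s]]) simp
          finally show "(\<integral>\<^sup>+\<omega>. epowr (\<Phi>n \<omega>) (r - 1) * H \<omega> s \<partial>P) \<le> enorm P r (\<lambda>\<omega>. H \<omega> s) * enorm P s' (\<lambda>\<omega>. epowr (\<Phi>n \<omega>) (r - 1))" .
        qed
        also have "\<dots> = W * enorm P s' (\<lambda>\<omega>. epowr (\<Phi>n \<omega>) (r - 1))"
          unfolding W_def by (rule nn_integral_multc[OF Wm])
        also have "enorm P s' (\<lambda>\<omega>. epowr (\<Phi>n \<omega>) (r - 1)) = epowr I ((r - 1) / r)"
        proof -
          have "(r - 1) * s' = r" using r1 by (simp add: s'_def)
          moreover have "0 < s'" using r1 by (simp add: s'_def)
          ultimately show ?thesis using r1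
            by (simp add: enorm_def epowr_epowr I_def s'_def)
        qed
        finally have main: "I \<le> W * epowr I ((r - 1) / r)" .
        obtain i where i: "I = ennreal i" "0 \<le> i" using Ifin by (cases I) auto
        have "i \<le> w * i powr ((r - 1) / r)"
          using main i w by (simp add: epowr_ennreal ennreal_mult[symmetric] ennreal_le_iff)
        have "i \<le> w powr r"
        proof (cases "i = 0")
          case True then show ?thesis by simp
        next
          case False
          then have ipos: "0 < i" using i by simp
          have split: "i = i powr (1 / r) * i powr ((r - 1) / r)"
            using ipos r1 by (simp add: powr_add[symmetric] add_divide_distrib[symmetric])
          have "i powr (1 / r) * i powr ((r - 1) / r) \<le> w * i powr ((r - 1) / r)"
            using \<open>i \<le> w * i powr ((r - 1) / r)\<close> split by simp
          then have "i powr (1 / r) \<le> w" using ipos by (simp add: mult_le_cancel_right)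
          then have "(i powr (1 / r)) powr r \<le> w powr r" using ipos r1 by (intro powr_mono2) auto
          then show ?thesis using ipos r1 by (simp add: powr_powr)
        qed
        then show ?thesis using i by (simp add: I_def \<Phi>n_def ennreal_leI)
      qed
      have "(\<integral>\<^sup>+\<omega>. epowr (\<Phi> \<omega>) r \<partial>P) = (\<integral>\<^sup>+\<omega>. (SUP n. epowr (min (\<Phi> \<omega>) (of_nat n)) r) \<partial>P)"
        using r by (simp add: SUP_epowr_min)
      also have "\<dots> = (SUP n. \<integral>\<^sup>+\<omega>. epowr (min (\<Phi> \<omega>) (of_nat n)) r \<partial>P)"
        using r by (intro nn_integral_monotone_convergence_SUP)
          (auto simp: incseq_def le_fun_def intro!: epowr_mono min.mono)
      also have "\<dots> \<le> ennreal (w powr r)"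
        by (intro SUP_least bound)
      finally have "(\<integral>\<^sup>+\<omega>. epowr (\<Phi> \<omega>) r \<partial>P) \<le> ennreal (w powr r)" .
      then have "enorm P r \<Phi> \<le> epowr (ennreal (w powr r)) (1 / r)"
        unfolding enorm_def using r by (intro epowr_mono) auto
      also have "\<dots> = W" using w r by (simp add: epowr_ennreal powr_powr)
      finally have "enorm P r \<Phi> \<le> W" .
      moreover have "(\<lambda>\<omega>. \<integral>\<^sup>+s. H \<omega> s \<partial>S) = \<Phi>" by (simp add: \<Phi>_def[abs_def])
      ultimately show ?thesis by (simp add: W_def)
    qed
  qed
qed

lemma powr_sum_le:
  fixes u v e :: real
  assumes u: "0 < u" and v: "0 \<le> v" and e: "0 \<le> e"
  shows "(u + v) powr e \<le> 2 powr e * (u powr e + v powr e)"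
proof -
  have "(u + v) powr e \<le> (2 * max u v) powr e"
    using u v e by (intro powr_mono2) auto
  also have "\<dots> = 2 powr e * (max u v) powr e" using u v by (simp add: powr_mult)
  also have "(max u v) powr e \<le> u powr e + v powr e"
    by (cases "u \<le> v") (auto simp: max_def)
  then have "2 powr e * (max u v) powr e \<le> 2 powr e * (u powr e + v powr e)"
    by (intro mult_left_mono) auto
  finally show ?thesis .
qed

definition sc_const :: "real \<Rightarrow> real" where
  "sc_const q = q * (q - 1) * 2 powr q"

lemma sc_const_ge: assumes "2 \<le> q" shows "1 \<le> sc_const q" "q \<le> sc_const q"
proof -
  have "4 \<le> 2 powr q" using assms powr_mono[of 2 q 2] by simp
  then have A: "1 * 4 \<le> (q - 1) * 2 powr q" using assms by (intro mult_mono) auto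
  then have "q * 1 \<le> q * ((q - 1) * 2 powr q)" using assms by (intro mult_left_mono) auto
  then have B: "q \<le> sc_const q" by (simp add: sc_const_def mult.assoc)
  then show "q \<le> sc_const q" .
  show "1 \<le> sc_const q" using B assms by linarith
qed

lemma sc_pos:
  fixes x y q :: real
  assumes x: "0 < x" and y: "0 < y" and q: "2 \<le> q"
  shows "y powr q \<le> x powr q + q * x powr (q - 1) * (y - x)
      + sc_const q * (x powr (q - 2) * (y - x)\<^sup>2 + \<bar>y - x\<bar> powr q)"
proof (cases "y = x")
  case True
  then show ?thesis using sc_const_ge[OF q] by simp
next
  case False
  define diff where "diff = (\<lambda>m::nat. if m = 0 then (\<lambda>t::real. t powr q)
      else if m = 1 then (\<lambda>t. q * t powr (q - 1)) else (\<lambda>t. q * (q - 1) * t powr (q - 2)))"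
  have D: "\<forall>m t. m < 2 \<and> min x y \<le> t \<and> t \<le> max x y \<longrightarrow> DERIV (diff m) t :> diff (Suc m) t"
  proof (intro allI impI)
    fix m :: nat and t :: real
    assume m: "m < 2 \<and> min x y \<le> t \<and> t \<le> max x y"
    then have t: "0 < t" using x y by (auto simp: min_def split: if_splits)
    show "DERIV (diff m) t :> diff (Suc m) t"
    proof (cases "m = 0")
      case True
      then show ?thesis using has_real_derivative_powr[OF t, of q] by (simp add: diff_def)
    next
      case False
      then have "m = 1" using m by simp
      moreover have "DERIV (\<lambda>t. q * t powr (q - 1)) t :> q * ((q - 1) * t powr (q - 2))"
        using DERIV_cmult[OF has_real_derivative_powr[OF t, of "q - 1"], of q] by (simp add: algebra_simps)
      ultimately show ?thesis by (simp add: diff_def algebra_simps)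
    qed
  qed
  obtain t where t: "(if y < x then y < t \<and> t < x else x < t \<and> t < y)"
    and eq: "diff 0 y = (\<Sum>m<2. (diff m x / fact m) * (y - x)^m) + (diff 2 t / fact 2) * (y - x)^2"
    using Taylor[of 2 diff "\<lambda>t. t powr q" "min x y" "max x y" x y] D False
    by (auto simp: diff_def)
  have tpos: "0 < t" and tle: "t \<le> x + \<bar>y - x\<bar>" using t x y by (auto split: if_splits)
  have eq2: "y powr q = x powr q + q * x powr (q - 1) * (y - x) + q * (q - 1) * t powr (q - 2) / 2 * (y - x)\<^sup>2"
    using eq by (simp add: diff_def eval_nat_numeral)
  have h: "0 < \<bar>y - x\<bar>" using False by simp
  have "t powr (q - 2) \<le> (x + \<bar>y - x\<bar>) powr (q - 2)" using tpos tle q by (intro powr_mono2) auto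
  also have "\<dots> \<le> 2 powr (q - 2) * (x powr (q - 2) + \<bar>y - x\<bar> powr (q - 2))"
    using x q by (intro powr_sum_le) auto
  finally have tb: "t powr (q - 2) \<le> 2 powr (q - 2) * (x powr (q - 2) + \<bar>y - x\<bar> powr (q - 2))" .
  have hq: "\<bar>y - x\<bar> powr (q - 2) * (y - x)\<^sup>2 = \<bar>y - x\<bar> powr q"
  proof -
    have "(y - x)\<^sup>2 = \<bar>y - x\<bar> powr 2" using powr_realpow[OF h, of 2] by simp
    then show ?thesis using powr_add[of "\<bar>y - x\<bar>" "q - 2" 2] h by simp
  qed
  have "q * (q - 1) * t powr (q - 2) / 2 * (y - x)\<^sup>2
      \<le> q * (q - 1) * (2 powr (q - 2) * (x powr (q - 2) + \<bar>y - x\<bar> powr (q - 2))) / 2 * (y - x)\<^sup>2"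
    using tb q by (intro mult_right_mono divide_right_mono mult_left_mono) auto
  also have "\<dots> = q * (q - 1) * 2 powr (q - 2) / 2 * (x powr (q - 2) * (y - x)\<^sup>2 + \<bar>y - x\<bar> powr (q - 2) * (y - x)\<^sup>2)"
  proof -
    have gen: "\<And>(c::real) P X H D. c * (P * (X + H)) / 2 * D = c * P / 2 * (X * D + H * D)"
      by (simp add: field_simps)
    show ?thesis by (rule gen)
  qed
  also have "\<dots> = q * (q - 1) * 2 powr (q - 2) / 2 * (x powr (q - 2) * (y - x)\<^sup>2 + \<bar>y - x\<bar> powr q)"
    using hq by simp
  also have "\<dots> \<le> sc_const q * (x powr (q - 2) * (y - x)\<^sup>2 + \<bar>y - x\<bar> powr q)"
  proof (intro mult_right_mono)
    have "2 powr (q - 2) / 2 \<le> 2 powr q"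
    proof -
      have a1: "2 powr (q - 2) \<le> 2 powr q" by (intro powr_mono) auto
      have a2: "0 \<le> 2 powr q" by simp
      show ?thesis using a1 a2 by linarith
    qed
    then have "q * (q - 1) * (2 powr (q - 2) / 2) \<le> q * (q - 1) * 2 powr q"
      using q by (intro mult_left_mono) auto
    then show "q * (q - 1) * 2 powr (q - 2) / 2 \<le> sc_const q" by (simp add: sc_const_def)
  qed auto
  finally show ?thesis using eq2 by simp
qed

definition sphi :: "real \<Rightarrow> real \<Rightarrow> real" where
  "sphi q a = sgn a * \<bar>a\<bar> powr (q - 1)"

lemma sc_ineq_nonneg:
  fixes a b q :: real
  assumes a: "0 \<le> a" and q: "2 \<le> q"
  shows "\<bar>a + b\<bar> powr q \<le> \<bar>a\<bar> powr q + q * sphi q a * b + sc_const q * (\<bar>a\<bar> powr (q - 2) * b\<^sup>2 + \<bar>b\<bar> powr q)"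
proof -
  have C: "1 \<le> sc_const q" "q \<le> sc_const q" using sc_const_ge[OF q] by auto
  consider "a = 0" | "0 < a" "0 < a + b" | "0 < a" "a + b \<le> 0" using a by linarith
  then show ?thesis
  proof cases
    case 1
    have "\<bar>b\<bar> powr q \<le> sc_const q * \<bar>b\<bar> powr q" using C mult_right_mono[of 1 "sc_const q" "\<bar>b\<bar> powr q"] by simp
    then show ?thesis using 1 by (simp add: sphi_def)
  next
    case 2
    then show ?thesis using sc_pos[of a "a + b" q] q by (simp add: sphi_def)
  next
    case 3
    have ab: "a \<le> \<bar>b\<bar>" "\<bar>a + b\<bar> \<le> \<bar>b\<bar>" using 3 by auto
    have "\<bar>a + b\<bar> powr q \<le> \<bar>b\<bar> powr q" using ab q by (intro powr_mono2) auto
    have e1: "a powr (q - 1) = a powr (q - 2) * a" using powr_add[of a "q - 2" 1] 3 by simp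
    have "a * \<bar>b\<bar> \<le> \<bar>b\<bar> * \<bar>b\<bar>" using ab 3 by (intro mult_right_mono) auto
    then have "a powr (q - 2) * (a * \<bar>b\<bar>) \<le> a powr (q - 2) * (\<bar>b\<bar> * \<bar>b\<bar>)"
      by (intro mult_left_mono) auto
    then have g: "a powr (q - 1) * \<bar>b\<bar> \<le> a powr (q - 2) * b\<^sup>2"
      by (simp add: e1 mult.assoc power2_eq_square)
    have f1: "\<bar>a + b\<bar> powr q \<le> \<bar>b\<bar> powr q" using ab q by (intro powr_mono2) auto
    have sp: "sphi q a = a powr (q - 1)" using 3 by (simp add: sphi_def)
    have bneg: "b < 0" using 3 by simp
    have "q * sphi q a * b = - (q * (a powr (q - 1) * \<bar>b\<bar>))" using bneg by (simp add: sp abs_of_neg)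
    moreover have "q * (a powr (q - 1) * \<bar>b\<bar>) \<le> q * (a powr (q - 2) * b\<^sup>2)"
      using g q by (intro mult_left_mono) auto
    ultimately have f2: "- (q * (\<bar>a\<bar> powr (q - 2) * b\<^sup>2)) \<le> q * sphi q a * b" using 3 by (simp only: abs_of_pos)
    have f3: "q * (\<bar>a\<bar> powr (q - 2) * b\<^sup>2) \<le> sc_const q * (\<bar>a\<bar> powr (q - 2) * b\<^sup>2)"
      using C by (intro mult_right_mono) auto
    have f4: "\<bar>b\<bar> powr q \<le> sc_const q * \<bar>b\<bar> powr q" using C mult_right_mono[of 1 "sc_const q" "\<bar>b\<bar> powr q"] by simp
    have f5: "0 \<le> \<bar>a\<bar> powr q" by simp
    have d: "sc_const q * (\<bar>a\<bar> powr (q - 2) * b\<^sup>2 + \<bar>b\<bar> powr q) = sc_const q * (\<bar>a\<bar> powr (q - 2) * b\<^sup>2) + sc_const q * \<bar>b\<bar> powr q"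
      by (simp add: distrib_left)
    show ?thesis unfolding d using f1 f2 f3 f4 f5 by linarith
  qed
qed

lemma sc_ineq:
  fixes a b q :: real
  assumes q: "2 \<le> q"
  shows "\<bar>a + b\<bar> powr q \<le> \<bar>a\<bar> powr q + q * sphi q a * b + sc_const q * (\<bar>a\<bar> powr (q - 2) * b\<^sup>2 + \<bar>b\<bar> powr q)"
proof (cases "0 \<le> a")
  case True then show ?thesis using sc_ineq_nonneg q by blast
next
  case False
  have "\<bar>-a + -b\<bar> powr q \<le> \<bar>-a\<bar> powr q + q * sphi q (-a) * (-b) + sc_const q * (\<bar>-a\<bar> powr (q - 2) * (-b)\<^sup>2 + \<bar>-b\<bar> powr q)"
    using False q by (intro sc_ineq_nonneg) auto
  moreover have "\<bar>-a + -b\<bar> = \<bar>a + b\<bar>" by simp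
  moreover have "sphi q (-a) = - sphi q a" by (simp add: sphi_def)
  ultimately show ?thesis by (simp add: algebra_simps)
qed

lemma powr_le_1_plus:
  fixes x e q :: real
  assumes "0 \<le> e" "e \<le> q"
  shows "\<bar>x\<bar> powr e \<le> 1 + \<bar>x\<bar> powr q"
proof (cases "\<bar>x\<bar> \<le> 1")
  case True
  then have "\<bar>x\<bar> powr e \<le> 1"
    using assms powr_mono2[of e "\<bar>x\<bar>" 1] by simp
  then show ?thesis by (smt (verit) powr_ge_zero)
next
  case False
  then have "\<bar>x\<bar> powr e \<le> \<bar>x\<bar> powr q" using assms by (intro powr_mono) auto
  then show ?thesis by simp
qed

lemma (in prob_space) jensen_epowr:
  assumes t: "0 < t" "t \<le> 1" and u: "u \<in> borel_measurable M"
  shows "(\<integral>\<^sup>+x. epowr (u x) t \<partial>M) \<le> epowr (\<integral>\<^sup>+x. u x \<partial>M) t"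
proof (cases "t = 1")
  case True then show ?thesis by simp
next
  case False
  then have t1: "t < 1" using t by simp
  define r where "r = 1 / t"
  have r1: "1 < r" using t t1 by (simp add: r_def)
  have "(\<integral>\<^sup>+x. epowr (u x) t * 1 \<partial>M) \<le> enorm M r (\<lambda>x. epowr (u x) t) * enorm M (r / (r - 1)) (\<lambda>x. 1)"
    by (rule holder_enorm[OF r1]) (use u in auto)
  also have "enorm M (r / (r - 1)) (\<lambda>x. 1) = 1"
    using r1 by (intro enorm_const) auto
  also have "enorm M r (\<lambda>x. epowr (u x) t) = epowr (\<integral>\<^sup>+x. u x \<partial>M) t"
    using t by (simp add: enorm_def epowr_epowr r_def)
  finally show ?thesis by simp
qed

definition mz_const :: "real \<Rightarrow> real" where
  "mz_const q = max (2 * sc_const q) ((4 * sc_const q) powr (q / 2))"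

lemma mz_rec:
  fixes q C K m \<alpha> :: real and k :: nat
  assumes q: "2 \<le> q" and C: "0 < C" and K: "K = max (2 * C) ((4 * C) powr (q / 2))"
    and m: "0 \<le> m" and a: "0 \<le> \<alpha>" "\<alpha> \<le> K * real k powr (q / 2) * m"
  shows "\<alpha> + C * (\<alpha> powr (1 - 2 / q) * m powr (2 / q) + m) \<le> K * real (Suc k) powr (q / 2) * m"
proof -
  define B where "B = K * real k powr (q / 2) * m"
  have K0: "0 < K" using C K by auto
  have B0: "0 \<le> B" using K0 m by (simp add: B_def)
  have e0: "0 \<le> 1 - 2 / q" using q by (simp add: field_simps)
  have "\<alpha> powr (1 - 2 / q) \<le> B powr (1 - 2 / q)"
    using a e0 by (intro powr_mono2) (auto simp: B_def)
  then have "\<alpha> + C * (\<alpha> powr (1 - 2 / q) * m powr (2 / q) + m) \<le> B + C * (B powr (1 - 2 / q) * m powr (2 / q) + m)"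
    using a C by (intro add_mono mult_left_mono mult_right_mono) (auto simp: B_def)
  also have "\<dots> \<le> K * real (Suc k) powr (q / 2) * m"
  proof (cases "m = 0")
    case True
    then show ?thesis using q by (simp add: B_def)
  next
    case False
    then have mpos: "0 < m" using m by simp
    show ?thesis
    proof (cases "k = 0")
      case True
      then have "B = 0" using q by (simp add: B_def)
      then show ?thesis using True K C mpos q by (simp add: mult_right_mono)
    next
      case False
      define x where "x = real k"
      have x1: "1 \<le> x" using False by (simp add: x_def)
      have "B powr (1 - 2 / q) = K powr (1 - 2 / q) * (x powr (q / 2)) powr (1 - 2 / q) * m powr (1 - 2 / q)"
        using K0 x1 mpos by (simp add: B_def x_def powr_mult)
      also have "(x powr (q / 2)) powr (1 - 2 / q) = x powr (q / 2 - 1)"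
      proof -
        have "q / 2 * (1 - 2 / q) = q / 2 - 1" using q by (simp add: field_simps)
        then show ?thesis by (simp only: powr_powr)
      qed
      finally have Bp: "B powr (1 - 2 / q) * m powr (2 / q) = K powr (1 - 2 / q) * x powr (q / 2 - 1) * m"
        using mpos by (simp add: mult.assoc powr_add[symmetric])
      have Kq: "4 * C \<le> K powr (2 / q)"
      proof -
        have "(4 * C) powr (q / 2) \<le> K" using K by simp
        then have "((4 * C) powr (q / 2)) powr (2 / q) \<le> K powr (2 / q)"
          using C q by (intro powr_mono2) auto
        then show ?thesis using C q by (simp add: powr_powr)
      qed
      have CK: "C * K powr (1 - 2 / q) \<le> K / 4"
      proof -
        have "K powr (1 - 2 / q) = K / K powr (2 / q)"
          using K0 by (simp add: powr_diff)
        then have "C * K powr (1 - 2 / q) = C * K / K powr (2 / q)" by simp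
        also have "\<dots> \<le> C * K / (4 * C)"
          using Kq C K0 by (intro divide_left_mono) auto
        also have "\<dots> = K / 4" using C by simp
        finally show ?thesis .
      qed
      have xe: "1 \<le> x powr (q / 2 - 1)" using x1 q by (intro ge_one_powr_ge_zero) auto
      have C2: "C \<le> K / 2" using K by simp
      have "B + C * (B powr (1 - 2 / q) * m powr (2 / q) + m)
          = K * x powr (q / 2) * m + (C * K powr (1 - 2 / q)) * x powr (q / 2 - 1) * m + C * m"
        unfolding Bp by (simp add: B_def x_def algebra_simps)
      also have "\<dots> \<le> K * x powr (q / 2) * m + (K / 4) * x powr (q / 2 - 1) * m + (K / 2) * x powr (q / 2 - 1) * m"
      proof -
        have "(C * K powr (1 - 2 / q)) * x powr (q / 2 - 1) * m \<le> (K / 4) * x powr (q / 2 - 1) * m"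
          using CK mpos by (intro mult_right_mono) auto
        moreover have "C * m \<le> (K / 2) * x powr (q / 2 - 1) * m"
        proof -
          have "C * 1 \<le> (K / 2) * x powr (q / 2 - 1)" using C2 xe C by (intro mult_mono) auto
          then show ?thesis using mpos by (simp add: mult_right_mono)
        qed
        ultimately show ?thesis by linarith
      qed
      also have "\<dots> \<le> K * (x powr (q / 2) + x powr (q / 2 - 1)) * m"
      proof -
        define t where "t = K * x powr (q / 2 - 1) * m"
        have t0: "0 \<le> t" using K0 mpos by (simp add: t_def)
        have t1: "(K / 4) * x powr (q / 2 - 1) * m = t / 4" "(K / 2) * x powr (q / 2 - 1) * m = t / 2"
          by (simp_all add: t_def)
        have t2: "K * (x powr (q / 2) + x powr (q / 2 - 1)) * m = K * x powr (q / 2) * m + t"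
          by (simp add: t_def distrib_left distrib_right)
        show ?thesis unfolding t1 t2 using t0 by linarith
      qed
      also have "x powr (q / 2) + x powr (q / 2 - 1) \<le> (x + 1) powr (q / 2)"
      proof -
        have "x powr (q / 2) + x powr (q / 2 - 1) = (x + 1) * x powr (q / 2 - 1)"
          using x1 powr_split1[of x "q / 2"] by (simp add: algebra_simps)
        also have "\<dots> \<le> (x + 1) * (x + 1) powr (q / 2 - 1)"
          using x1 q by (intro mult_left_mono powr_mono2) auto
        also have "\<dots> = (x + 1) powr (q / 2)" using x1 powr_split1[of "x + 1" "q / 2"] by simp
        finally show ?thesis .
      qed
      then have "K * (x powr (q / 2) + x powr (q / 2 - 1)) * m \<le> K * (x + 1) powr (q / 2) * m"
        using K0 mpos by (intro mult_right_mono mult_left_mono) auto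
      finally show ?thesis by (simp add: x_def add.commute)
    qed
  qed
  finally show ?thesis .
qed

lemma abs_sphi: "\<bar>sphi q x\<bar> \<le> \<bar>x\<bar> powr (q - 1)"
  unfolding sphi_def by (cases "x = 0") (simp_all add: abs_mult sgn_if)

lemma sphi_measurable[measurable]: "sphi q \<in> borel_measurable borel"
  unfolding sphi_def by measurable

lemma sq_powr: "x\<^sup>2 = \<bar>x::real\<bar> powr 2"
proof (cases "x = 0")
  case False
  then have "\<bar>x\<bar> powr 2 = \<bar>x\<bar> ^ 2" using powr_numeral[of "\<bar>x\<bar>" "num.Bit0 num.One"] by simp
  then show ?thesis by simp
qed simp

lemma (in prob_space) mz_ineq:
  fixes Z :: "'i \<Rightarrow> 'a \<Rightarrow> real" and q m :: real
  assumes q: "2 \<le> q" and indep: "indep_vars (\<lambda>_. borel) Z J"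
    and int: "\<And>j. j \<in> J \<Longrightarrow> integrable M (Z j)"
    and mean: "\<And>j. j \<in> J \<Longrightarrow> expectation (Z j) = 0"
    and mom: "\<And>j. j \<in> J \<Longrightarrow> (\<integral>\<^sup>+\<omega>. ennreal (\<bar>Z j \<omega>\<bar> powr q) \<partial>M) = ennreal m"
    and m: "0 \<le> m"
    and I: "finite I" "I \<subseteq> J"
  shows "(\<integral>\<^sup>+\<omega>. ennreal (\<bar>\<Sum>j\<in>I. Z j \<omega>\<bar> powr q) \<partial>M) \<le> ennreal (mz_const q * real (card I) powr (q / 2) * m)"
  using I
proof (induction I rule: finite_induct)
  case empty
  then show ?case using q by simp
next
  case (insert i I)
  have IJ: "I \<subseteq> J" "i \<in> J" using insert by auto
  have rv[measurable]: "Z j \<in> borel_measurable M" if "j \<in> J" for j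
    using int[OF that] by (rule borel_measurable_integrable)
  define S where "S \<omega> = (\<Sum>j\<in>I. Z j \<omega>)" for \<omega>
  define Y where "Y = Z i"
  define C where "C = sc_const q"
  define K where "K = mz_const q"
  define k where "k = card I"
  have C1: "1 \<le> C" using sc_const_ge[OF q] by (simp add: C_def)
  have Kdef: "K = max (2 * C) ((4 * C) powr (q / 2))" by (simp add: K_def C_def mz_const_def)
  have K0: "0 \<le> K" using C1 Kdef by auto
  have Sm[measurable]: "S \<in> borel_measurable M" unfolding S_def using IJ by (intro borel_measurable_sum) auto
  have Ym[measurable]: "Y \<in> borel_measurable M" unfolding Y_def using IJ by simp
  have IH: "(\<integral>\<^sup>+\<omega>. ennreal (\<bar>S \<omega>\<bar> powr q) \<partial>M) \<le> ennreal (K * real k powr (q / 2) * m)"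
    using insert.IH[OF IJ(1)] by (simp add: S_def K_def k_def)
  obtain \<alpha> where \<alpha>: "(\<integral>\<^sup>+\<omega>. ennreal (\<bar>S \<omega>\<bar> powr q) \<partial>M) = ennreal \<alpha>" "0 \<le> \<alpha>"
  proof (cases "(\<integral>\<^sup>+\<omega>. ennreal (\<bar>S \<omega>\<bar> powr q) \<partial>M)" rule: ennreal_cases)
    case (real r) then show ?thesis using that by auto
  next
    case top then show ?thesis using IH by (simp add: top_unique)
  qed
  have \<alpha>le: "\<alpha> \<le> K * real k powr (q / 2) * m" using IH \<alpha> K0 m by (simp add: ennreal_le_iff)
  have intSq: "integrable M (\<lambda>\<omega>. \<bar>S \<omega>\<bar> powr q)"
    by (rule integrableI_nonneg) (use \<alpha> in auto)
  have intYq: "integrable M (\<lambda>\<omega>. \<bar>Y \<omega>\<bar> powr q)"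
    by (rule integrableI_nonneg) (use mom[OF IJ(2)] rv[OF IJ(2)] in \<open>auto simp: Y_def\<close>)
  have iS: "(\<integral>\<omega>. \<bar>S \<omega>\<bar> powr q \<partial>M) = \<alpha>"
    using nn_integral_eq_integral[OF intSq] \<alpha> by simp
  have iY: "(\<integral>\<omega>. \<bar>Y \<omega>\<bar> powr q \<partial>M) = m"
    using nn_integral_eq_integral[OF intYq] mom[OF IJ(2)] m by (simp add: Y_def)
  have ind: "indep_var borel Y borel S"
  proof -
    have "indep_vars (\<lambda>_. borel) Z (insert i I)" using indep_vars_subset[OF indep] insert by auto
    from indep_vars_sum[OF insert(1,2) this] show ?thesis by (simp add: Y_def S_def[abs_def])
  qed
  have ind1: "indep_var borel Y borel (\<lambda>\<omega>. sphi q (S \<omega>))"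
    using indep_var_compose[OF ind, of id borel "sphi q" borel] by (simp add: comp_def)
  have ind2: "indep_var borel (\<lambda>\<omega>. (Y \<omega>)\<^sup>2) borel (\<lambda>\<omega>. \<bar>S \<omega>\<bar> powr (q - 2))"
    using indep_var_compose[OF ind, of "\<lambda>x. x\<^sup>2" borel "\<lambda>x. \<bar>x\<bar> powr (q - 2)" borel] by (simp add: comp_def)
  have int1S: "integrable M (\<lambda>\<omega>. 1 + \<bar>S \<omega>\<bar> powr q)" using intSq by simp
  have int1Y: "integrable M (\<lambda>\<omega>. 1 + \<bar>Y \<omega>\<bar> powr q)" using intYq by simp
  have iY1: "integrable M Y" using int[OF IJ(2)] by (simp add: Y_def)
  have iphi: "integrable M (\<lambda>\<omega>. sphi q (S \<omega>))"
  proof (rule Bochner_Integration.integrable_bound[OF int1S])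
    show "(\<lambda>\<omega>. sphi q (S \<omega>)) \<in> borel_measurable M" by measurable
    show "AE x in M. norm (sphi q (S x)) \<le> norm (1 + \<bar>S x\<bar> powr q)"
    proof (intro AE_I2)
      fix x
      have "\<bar>sphi q (S x)\<bar> \<le> 1 + \<bar>S x\<bar> powr q"
        using abs_sphi[of q "S x"] powr_le_1_plus[of "q - 1" q "S x"] q by linarith
      then show "norm (sphi q (S x)) \<le> norm (1 + \<bar>S x\<bar> powr q)" by simp
    qed
  qed
  have iS2: "integrable M (\<lambda>\<omega>. \<bar>S \<omega>\<bar> powr (q - 2))"
  proof (rule Bochner_Integration.integrable_bound[OF int1S])
    show "(\<lambda>\<omega>. \<bar>S \<omega>\<bar> powr (q - 2)) \<in> borel_measurable M" by measurable
    show "AE x in M. norm (\<bar>S x\<bar> powr (q - 2)) \<le> norm (1 + \<bar>S x\<bar> powr q)"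
    proof (intro AE_I2)
      fix x
      have "\<bar>S x\<bar> powr (q - 2) \<le> 1 + \<bar>S x\<bar> powr q" using powr_le_1_plus[of "q - 2" q "S x"] q by simp
      then show "norm (\<bar>S x\<bar> powr (q - 2)) \<le> norm (1 + \<bar>S x\<bar> powr q)" by simp
    qed
  qed
  have iY2: "integrable M (\<lambda>\<omega>. (Y \<omega>)\<^sup>2)"
  proof (rule Bochner_Integration.integrable_bound[OF int1Y])
    show "(\<lambda>\<omega>. (Y \<omega>)\<^sup>2) \<in> borel_measurable M" by measurable
    show "AE x in M. norm ((Y x)\<^sup>2) \<le> norm (1 + \<bar>Y x\<bar> powr q)"
    proof (intro AE_I2)
      fix x
      have "(Y x)\<^sup>2 \<le> 1 + \<bar>Y x\<bar> powr q" using powr_le_1_plus[of 2 q "Y x"] q sq_powr[of "Y x"] by linarith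
      then show "norm ((Y x)\<^sup>2) \<le> norm (1 + \<bar>Y x\<bar> powr q)" by simp
    qed
  qed
  have ip1: "integrable M (\<lambda>\<omega>. Y \<omega> * sphi q (S \<omega>))" by (rule indep_var_integrable[OF ind1 iY1 iphi])
  have ip2: "integrable M (\<lambda>\<omega>. (Y \<omega>)\<^sup>2 * \<bar>S \<omega>\<bar> powr (q - 2))" by (rule indep_var_integrable[OF ind2 iY2 iS2])
  have e1: "(\<integral>\<omega>. Y \<omega> * sphi q (S \<omega>) \<partial>M) = 0"
    using indep_var_lebesgue_integral[OF ind1 iY1 iphi] mean[OF IJ(2)] by (simp add: Y_def)
  have e2: "(\<integral>\<omega>. (Y \<omega>)\<^sup>2 * \<bar>S \<omega>\<bar> powr (q - 2) \<partial>M) = (\<integral>\<omega>. (Y \<omega>)\<^sup>2 \<partial>M) * (\<integral>\<omega>. \<bar>S \<omega>\<bar> powr (q - 2) \<partial>M)"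
    by (rule indep_var_lebesgue_integral[OF ind2 iY2 iS2])
  define R where "R \<omega> = \<bar>S \<omega>\<bar> powr q + q * (Y \<omega> * sphi q (S \<omega>)) + C * ((Y \<omega>)\<^sup>2 * \<bar>S \<omega>\<bar> powr (q - 2) + \<bar>Y \<omega>\<bar> powr q)" for \<omega>
  have iR: "integrable M R" unfolding R_def using intSq ip1 ip2 intYq by simp
  have Rge: "\<bar>S \<omega> + Y \<omega>\<bar> powr q \<le> R \<omega>" for \<omega>
    using sc_ineq[OF q, of "S \<omega>" "Y \<omega>"] unfolding R_def C_def by (simp add: ac_simps)
  have intR: "(\<integral>\<omega>. R \<omega> \<partial>M) = \<alpha> + C * ((\<integral>\<omega>. (Y \<omega>)\<^sup>2 \<partial>M) * (\<integral>\<omega>. \<bar>S \<omega>\<bar> powr (q - 2) \<partial>M) + m)"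
    unfolding R_def using intSq ip1 ip2 intYq iS iY e1 e2 by simp
  have E1: "(\<integral>\<omega>. \<bar>S \<omega>\<bar> powr (q - 2) \<partial>M) \<le> \<alpha> powr (1 - 2 / q)"
  proof (cases "\<alpha> = 0")
    case True
    then have z: "(\<integral>\<^sup>+\<omega>. ennreal (\<bar>S \<omega>\<bar> powr q) \<partial>M) = 0" using \<alpha> by simp
    have "AE \<omega> in M. ennreal (\<bar>S \<omega>\<bar> powr q) = 0"
      using z nn_integral_0_iff_AE[of "\<lambda>\<omega>. ennreal (\<bar>S \<omega>\<bar> powr q)" M] by simp
    then have "AE \<omega> in M. S \<omega> = 0" by (auto elim!: eventually_mono)
    then have "(\<integral>\<omega>. \<bar>S \<omega>\<bar> powr (q - 2) \<partial>M) = (\<integral>\<omega>. 0 \<partial>M)"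
      by (intro integral_cong_AE) (auto elim!: eventually_mono)
    then show ?thesis using True by simp
  next
    case False
    then have apos: "0 < \<alpha>" using \<alpha> by simp
    show ?thesis
    proof (cases "q = 2")
      case True
      have "(\<integral>\<omega>. \<bar>S \<omega>\<bar> powr (q - 2) \<partial>M) \<le> (\<integral>\<omega>. 1 \<partial>M)"
        using iS2 True by (intro integral_mono) auto
      then show ?thesis using True apos by (simp add: prob_space)
    next
      case False
      then have q2: "2 < q" using q by simp
      define t where "t = (q - 2) / q"
      have t: "0 < t" "t \<le> 1" using q2 by (auto simp: t_def field_simps)
      have "ennreal (\<integral>\<omega>. \<bar>S \<omega>\<bar> powr (q - 2) \<partial>M) = (\<integral>\<^sup>+\<omega>. ennreal (\<bar>S \<omega>\<bar> powr (q - 2)) \<partial>M)"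
        using nn_integral_eq_integral[OF iS2] by simp
      also have "\<dots> = (\<integral>\<^sup>+\<omega>. epowr (ennreal (\<bar>S \<omega>\<bar> powr q)) t \<partial>M)"
      proof (intro nn_integral_cong)
        fix \<omega>
        have "q * t = q - 2" using q2 by (simp add: t_def)
        then show "ennreal (\<bar>S \<omega>\<bar> powr (q - 2)) = epowr (ennreal (\<bar>S \<omega>\<bar> powr q)) t"
          by (simp add: epowr_ennreal powr_powr)
      qed
      also have "\<dots> \<le> epowr (\<integral>\<^sup>+\<omega>. ennreal (\<bar>S \<omega>\<bar> powr q) \<partial>M) t"
        by (rule jensen_epowr[OF t]) simp
      also have "\<dots> = ennreal (\<alpha> powr (1 - 2 / q))"
        using \<alpha> q2 by (simp add: epowr_ennreal t_def diff_divide_distrib)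
      finally show ?thesis using apos by (simp add: ennreal_le_iff)
    qed
  qed
  have E2: "(\<integral>\<omega>. (Y \<omega>)\<^sup>2 \<partial>M) \<le> m powr (2 / q)"
  proof -
    define t where "t = 2 / q"
    have t: "0 < t" "t \<le> 1" using q by (auto simp: t_def field_simps)
    have "ennreal (\<integral>\<omega>. (Y \<omega>)\<^sup>2 \<partial>M) = (\<integral>\<^sup>+\<omega>. ennreal ((Y \<omega>)\<^sup>2) \<partial>M)"
      using nn_integral_eq_integral[OF iY2] by simp
    also have "\<dots> = (\<integral>\<^sup>+\<omega>. epowr (ennreal (\<bar>Y \<omega>\<bar> powr q)) t \<partial>M)"
    proof (intro nn_integral_cong)
      fix \<omega>
      have "q * t = 2" using q by (simp add: t_def)
      have "(\<bar>Y \<omega>\<bar> powr q) powr t = \<bar>Y \<omega>\<bar> powr (q * t)" by (rule powr_powr)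
      also have "\<dots> = \<bar>Y \<omega>\<bar> powr 2" using \<open>q * t = 2\<close> by simp
      also have "\<dots> = (Y \<omega>)\<^sup>2" by (rule sq_powr[symmetric])
      finally have "(\<bar>Y \<omega>\<bar> powr q) powr t = (Y \<omega>)\<^sup>2" .
      then show "ennreal ((Y \<omega>)\<^sup>2) = epowr (ennreal (\<bar>Y \<omega>\<bar> powr q)) t"
        by (simp add: epowr_ennreal)
    qed
    also have "\<dots> \<le> epowr (\<integral>\<^sup>+\<omega>. ennreal (\<bar>Y \<omega>\<bar> powr q) \<partial>M) t"
      by (rule jensen_epowr[OF t]) simp
    also have "\<dots> = ennreal (m powr (2 / q))"
      using mom[OF IJ(2)] m by (simp add: epowr_ennreal t_def Y_def)
    finally show ?thesis by (simp add: ennreal_le_iff)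
  qed
  have E12: "(\<integral>\<omega>. (Y \<omega>)\<^sup>2 \<partial>M) * (\<integral>\<omega>. \<bar>S \<omega>\<bar> powr (q - 2) \<partial>M) \<le> \<alpha> powr (1 - 2 / q) * m powr (2 / q)"
    using mult_mono[OF E2 E1] by (simp add: mult.commute)
  have "(\<integral>\<omega>. R \<omega> \<partial>M) \<le> \<alpha> + C * (\<alpha> powr (1 - 2 / q) * m powr (2 / q) + m)"
    unfolding intR using E12 C1 by (intro add_left_mono mult_left_mono) auto
  also have "\<dots> \<le> K * real (Suc k) powr (q / 2) * m"
    by (rule mz_rec[OF q _ Kdef m \<alpha>(2) \<alpha>le]) (use C1 in auto)
  finally have Rb: "(\<integral>\<omega>. R \<omega> \<partial>M) \<le> K * real (Suc k) powr (q / 2) * m" .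
  have "(\<integral>\<^sup>+\<omega>. ennreal (\<bar>\<Sum>j\<in>insert i I. Z j \<omega>\<bar> powr q) \<partial>M) = (\<integral>\<^sup>+\<omega>. ennreal (\<bar>S \<omega> + Y \<omega>\<bar> powr q) \<partial>M)"
    using insert by (simp add: S_def Y_def add.commute)
  also have "\<dots> \<le> (\<integral>\<^sup>+\<omega>. ennreal (R \<omega>) \<partial>M)"
    by (intro nn_integral_mono ennreal_leI Rge)
  also have "\<dots> = ennreal (\<integral>\<omega>. R \<omega> \<partial>M)"
  proof (rule nn_integral_eq_integral[OF iR], intro AE_I2)
    fix \<omega> show "0 \<le> R \<omega>" using Rge[of \<omega>] powr_ge_zero[of "\<bar>S \<omega> + Y \<omega>\<bar>" q] by linarith
  qed
  also have "\<dots> \<le> ennreal (K * real (Suc k) powr (q / 2) * m)"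
    by (rule ennreal_leI[OF Rb])
  finally show ?case using insert by (simp add: K_def k_def)
qed

lemma geo_id: "(\<Sum>l=1..L. (y::real) ^ l) * (y - 1) = y ^ Suc L - y"
  by (induction L) (auto simp: algebra_simps)

lemma geo_lt1: assumes "0 < y" "y < 1" shows "(\<Sum>l=1..L. (y::real) ^ l) \<le> y / (1 - y)"
proof -
  have "(\<Sum>l=1..L. y ^ l) * (1 - y) = y - y ^ Suc L" using geo_id[where y=y and L=L] by (simp add: algebra_simps)
  also have "\<dots> \<le> y" using assms by simp
  finally show ?thesis using assms by (simp add: le_divide_eq)
qed

lemma geo_gt1: assumes "1 < y" shows "(\<Sum>l=1..L. (y::real) ^ l) \<le> y ^ Suc L / (y - 1)"
proof -
  have "(\<Sum>l=1..L. y ^ l) * (y - 1) = y ^ Suc L - y" by (rule geo_id)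
  also have "\<dots> \<le> y ^ Suc L" using assms by simp
  finally show ?thesis using assms by (simp add: le_divide_eq)
qed

lemma pow_powr: "0 < (A::real) \<Longrightarrow> (A ^ l) powr r = (A powr r) ^ l"
  by (simp add: powr_realpow[symmetric] powr_powr mult.commute)

lemma eps_ge1: "0 < (\<epsilon>::real) \<Longrightarrow> \<epsilon> \<le> 1 \<Longrightarrow> c \<le> 0 \<Longrightarrow> 1 \<le> \<epsilon> powr c"
  using powr_mono2'[of c \<epsilon> 1] by simp

lemma L_choice:
  fixes A c1 C\<alpha> \<alpha> \<epsilon> :: real
  assumes A: "1 < A" and c1: "0 < c1" and C: "0 < C\<alpha>" and a: "0 < \<alpha>" and e: "0 < \<epsilon>" "\<epsilon> \<le> 1/2"
  shows "\<exists>L::nat. 1 \<le> L \<and> C\<alpha> * (c1 * A ^ L) powr (- \<alpha>) \<le> \<epsilon> / 4 \<and>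
      A ^ L \<le> A * max 1 ((4 * C\<alpha>) powr (1 / \<alpha>) / c1) * \<epsilon> powr (- 1 / \<alpha>)"
proof -
  define Pr where "Pr L \<longleftrightarrow> 1 \<le> L \<and> C\<alpha> * (c1 * A ^ L) powr (- \<alpha>) \<le> \<epsilon> / 4" for L :: nat
  define thr where "thr = (4 * C\<alpha> / \<epsilon>) powr (1 / \<alpha>) / c1"
  have thr0: "0 < thr" using C e c1 by (simp add: thr_def)
  have key: "Pr L \<longleftrightarrow> 1 \<le> L \<and> thr \<le> A ^ L" for L
  proof -
    have AL: "0 < A ^ L" using A by simp
    have "C\<alpha> * (c1 * A ^ L) powr (- \<alpha>) \<le> \<epsilon> / 4 \<longleftrightarrow> 4 * C\<alpha> / \<epsilon> \<le> (c1 * A ^ L) powr \<alpha>"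
    proof -
      have X: "0 < (c1 * A ^ L) powr \<alpha>" using AL c1 A by simp
      show ?thesis using C e X by (simp add: powr_minus field_simps)
    qed
    also have "\<dots> \<longleftrightarrow> (4 * C\<alpha> / \<epsilon>) powr (1 / \<alpha>) \<le> c1 * A ^ L"
    proof
      assume h: "4 * C\<alpha> / \<epsilon> \<le> (c1 * A ^ L) powr \<alpha>"
      have "(4 * C\<alpha> / \<epsilon>) powr (1 / \<alpha>) \<le> ((c1 * A ^ L) powr \<alpha>) powr (1 / \<alpha>)"
        using h C e a by (intro powr_mono2) auto
      then show "(4 * C\<alpha> / \<epsilon>) powr (1 / \<alpha>) \<le> c1 * A ^ L" using a c1 AL by (simp add: powr_powr)
    next
      assume h: "(4 * C\<alpha> / \<epsilon>) powr (1 / \<alpha>) \<le> c1 * A ^ L"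
      have "((4 * C\<alpha> / \<epsilon>) powr (1 / \<alpha>)) powr \<alpha> \<le> (c1 * A ^ L) powr \<alpha>"
        using h a by (intro powr_mono2) auto
      then show "4 * C\<alpha> / \<epsilon> \<le> (c1 * A ^ L) powr \<alpha>" using a C e by (simp add: powr_powr)
    qed
    also have "\<dots> \<longleftrightarrow> thr \<le> A ^ L" using c1 by (simp add: thr_def divide_le_eq mult.commute)
    finally show ?thesis by (simp add: Pr_def)
  qed
  obtain n where n: "thr < A ^ n" using real_arch_pow[OF A] by blast
  have "Pr (max n 1)"
  proof -
    have "A ^ n \<le> A ^ max n 1" using A by (intro power_increasing) auto
    then show ?thesis using key n by auto
  qed
  define L where "L = (LEAST L. Pr L)"
  have PL: "Pr L" unfolding L_def by (rule LeastI) fact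
  have min: "\<not> Pr k" if "k < L" for k using not_less_Least[of k Pr] that by (simp add: L_def)
  have ebig: "1 \<le> \<epsilon> powr (- 1 / \<alpha>)" using e a by (intro eps_ge1) auto
  have AL: "A ^ L \<le> A * max 1 ((4 * C\<alpha>) powr (1 / \<alpha>) / c1) * \<epsilon> powr (- 1 / \<alpha>)"
  proof (cases "L = 1")
    case True
    have "A * 1 * 1 \<le> A * max 1 ((4 * C\<alpha>) powr (1 / \<alpha>) / c1) * \<epsilon> powr (- 1 / \<alpha>)"
      using A ebig by (intro mult_mono) auto
    then show ?thesis using True by simp
  next
    case False
    then have L2: "2 \<le> L" using PL by (simp add: Pr_def)
    have "\<not> Pr (L - 1)" using min L2 by simp
    then have "A ^ (L - 1) < thr" using key[of "L - 1"] L2 by auto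
    have t1: "(4 * C\<alpha> / \<epsilon>) powr (1 / \<alpha>) = (4 * C\<alpha>) powr (1 / \<alpha>) / \<epsilon> powr (1 / \<alpha>)"
      using C e by (simp add: powr_divide)
    have t2: "\<epsilon> powr (- 1 / \<alpha>) = 1 / \<epsilon> powr (1 / \<alpha>)"
      using powr_minus_divide[of \<epsilon> "1 / \<alpha>"] by simp
    have thr_eq: "thr = (4 * C\<alpha>) powr (1 / \<alpha>) / c1 * \<epsilon> powr (- 1 / \<alpha>)"
      unfolding thr_def t1 t2 by simp
    have "A ^ L = A * A ^ (L - 1)" using L2 by (simp add: power_eq_if)
    also have "\<dots> \<le> A * thr" using \<open>A ^ (L - 1) < thr\<close> A by simp
    also have "\<dots> = A * ((4 * C\<alpha>) powr (1 / \<alpha>) / c1 * \<epsilon> powr (- 1 / \<alpha>))" by (simp add: thr_eq)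
    also have "\<dots> \<le> A * (max 1 ((4 * C\<alpha>) powr (1 / \<alpha>) / c1) * \<epsilon> powr (- 1 / \<alpha>))"
      using A by (intro mult_left_mono mult_right_mono) auto
    finally show ?thesis by (simp add: mult.assoc)
  qed
  show ?thesis using PL AL by (auto simp: Pr_def)
qed

lemma powr_neg2: "0 < (e::real) \<Longrightarrow> e powr (-2) = 1 / e\<^sup>2"
  using powr_minus_divide[of e 2] powr_realpow[of e 2] by simp

lemma mlmc_arith:
  fixes N :: "nat \<Rightarrow> nat" and Cost :: "nat \<Rightarrow> real" and \<alpha> \<beta> \<gamma> C\<alpha> C\<beta> C\<gamma> A c1 c2 R :: real
  assumes pa: "0 < \<alpha>" "0 < \<beta>" "0 < \<gamma>" "0 < C\<alpha>" "0 < C\<beta>" "0 < C\<gamma>" "1 < A"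
    and c: "0 < c1" "0 < c2"
    and Nb: "\<And>l. 1 \<le> l \<Longrightarrow> c1 * A ^ l \<le> real (N l) \<and> real (N l) \<le> c2 * A ^ l"
    and cost: "\<And>l. 1 \<le> l \<Longrightarrow> Cost l \<le> C\<gamma> * real (N l) powr \<gamma>"
    and R: "0 < R"
  shows "\<exists>K>0. \<forall>\<epsilon>::real. 0 < \<epsilon> \<and> \<epsilon> \<le> 1/2 \<longrightarrow> (\<exists>L::nat. \<exists>M::nat \<Rightarrow> nat. 1 \<le> L \<and> (\<forall>l\<in>{1..L}. 1 \<le> M l) \<and>
      C\<alpha> * real (N L) powr (- \<alpha>) + (\<Sum>l=1..L. R * C\<beta> * real (M l) powr (- 1 / 2) * real (N l) powr (- \<beta>)) < \<epsilon> \<and>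
      (\<Sum>l=1..L. real (M l) * Cost l) \<le> K *
          (if \<beta> > \<gamma> / 2 then \<epsilon> powr (- \<gamma> / \<alpha>) + \<epsilon> powr (-2)
           else if \<beta> = \<gamma> / 2 then \<epsilon> powr (- \<gamma> / \<alpha>) + \<epsilon> powr (-2) * \<bar>log A \<epsilon>\<bar> ^ 3
           else \<epsilon> powr (- \<gamma> / \<alpha>) + \<epsilon> powr (-2 - (\<gamma> - 2 * \<beta>) / \<alpha>)))"
proof -
  have A0: "0 < A" using pa by simp
  define \<rho> where "\<rho> = (\<gamma> - 2 * \<beta>) / 3"
  define y where "y = A powr \<rho>"
  define g where "g = A powr \<gamma>"
  define v where "v = A powr (- (2 / 3) * (\<beta> + \<gamma>))"
  define D where "D = R * C\<beta> * c1 powr (- \<beta>)"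
  define B0 where "B0 = A * max 1 ((4 * C\<alpha>) powr (1 / \<alpha>) / c1)"
  define c3 where "c3 = log A B0 / log A 2 + 1 / \<alpha>"
  define F where "F \<epsilon> = (if \<beta> > \<gamma> / 2 then 1 else if \<beta> = \<gamma> / 2 then \<bar>log A \<epsilon>\<bar> ^ 3 else \<epsilon> powr (- (\<gamma> - 2 * \<beta>) / \<alpha>))" for \<epsilon> :: real
  define Kc where "Kc = (if \<beta> > \<gamma> / 2 then (y / (1 - y)) ^ 3 else if \<beta> = \<gamma> / 2 then c3 ^ 3 else (y * B0 powr \<rho> / (y - 1)) ^ 3)"
  define K where "K = C\<gamma> * c2 powr \<gamma> * (16 * D\<^sup>2 * Kc + g / (g - 1) * B0 powr \<gamma>)"
  have y0: "0 < y" using A0 by (simp add: y_def)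
  have g1: "1 < g" using pa by (simp add: g_def)
  have v0: "0 < v" using A0 by (simp add: v_def)
  have D0: "0 < D" using R pa c by (simp add: D_def)
  have B0A: "A \<le> B0" using A0 by (simp add: B0_def)
  have B0: "0 < B0" using A0 B0A by simp
  have logB0: "1 \<le> log A B0" using pa B0A B0 by (simp add: le_log_iff)
  have log2: "0 < log A 2" using pa by simp
  have Kc0: "0 \<le> Kc"
  proof -
    consider "\<beta> > \<gamma> / 2" | "\<beta> = \<gamma> / 2" | "\<beta> < \<gamma> / 2" by linarith
    then show ?thesis
    proof cases
      case 1
      then have "y < 1" using pa by (simp add: y_def \<rho>_def powr_less_one)
      then show ?thesis using 1 y0 by (simp add: Kc_def)
    next
      case 2 then show ?thesis using logB0 log2 pa by (simp add: Kc_def c3_def)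
    next
      case 3
      then have "1 < y" using pa by (simp add: y_def \<rho>_def)
      then show ?thesis using 3 B0 by (simp add: Kc_def)
    qed
  qed
  have K0: "0 < K"
  proof -
    have "0 < g / (g - 1) * B0 powr \<gamma>" using g1 B0 by simp
    then have "0 < 16 * D\<^sup>2 * Kc + g / (g - 1) * B0 powr \<gamma>" using Kc0 by (smt (verit) zero_le_mult_iff zero_le_power2)
    then show ?thesis using pa c by (simp add: K_def)
  qed
  have vg: "v * g = y"
    by (simp add: v_def g_def y_def \<rho>_def powr_add[symmetric] field_simps)
  have vy: "v powr (- 1 / 2) * A powr (- \<beta>) = y"
  proof -
    have ex: "- (2 / 3) * (\<beta> + \<gamma>) * (- 1 / 2) + - \<beta> = \<rho>" unfolding \<rho>_def by (simp add: field_simps)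
    have "v powr (- 1 / 2) * A powr (- \<beta>) = A powr (- (2 / 3) * (\<beta> + \<gamma>) * (- 1 / 2)) * A powr (- \<beta>)"
      by (simp only: v_def powr_powr)
    also have "\<dots> = A powr (- (2 / 3) * (\<beta> + \<gamma>) * (- 1 / 2) + - \<beta>)" by (simp only: powr_add)
    also have "\<dots> = y" by (simp only: ex y_def)
    finally show ?thesis .
  qed
  show ?thesis
  proof (intro exI[of _ K] conjI K0 allI impI)
    fix \<epsilon> :: real
    assume e: "0 < \<epsilon> \<and> \<epsilon> \<le> 1 / 2"
    then have e0: "0 < \<epsilon>" and e2: "\<epsilon> \<le> 1 / 2" by auto
    obtain L where L1: "1 \<le> L" and Lb: "C\<alpha> * (c1 * A ^ L) powr (- \<alpha>) \<le> \<epsilon> / 4"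
      and AL: "A ^ L \<le> B0 * \<epsilon> powr (- 1 / \<alpha>)"
      using L_choice[OF pa(7) c(1) pa(4) pa(1) e0 e2] by (auto simp: B0_def)
    define G where "G = (\<Sum>l=1..L. y ^ l)"
    have G0: "0 < G" unfolding G_def using L1 y0 by (intro sum_pos) auto
    define T where "T = (4 * D * G / \<epsilon>)\<^sup>2"
    have T0: "0 < T" using D0 G0 e0 by (simp add: T_def)
    define M where "M l = nat \<lceil>T * v ^ l\<rceil>" for l
    have Tv0: "0 < T * v ^ l" for l using T0 v0 by simp
    have Mge: "T * v ^ l \<le> real (M l)" for l unfolding M_def by (rule real_nat_ceiling_ge)
    have Mle: "real (M l) \<le> T * v ^ l + 1" for l
    proof -
      have "real (M l) = real_of_int \<lceil>T * v ^ l\<rceil>" using Tv0[of l] by (simp add: M_def)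
      also have "\<dots> \<le> T * v ^ l + 1" by (rule of_int_ceiling_le_add_one)
      finally show ?thesis .
    qed
    have M1: "1 \<le> M l" for l
    proof -
      have "0 < real (M l)" using Mge[of l] Tv0[of l] by linarith
      then show ?thesis by simp
    qed
    have Tpow: "T powr (- 1 / 2) = \<epsilon> / (4 * D * G)"
    proof -
      define X where "X = 4 * D * G / \<epsilon>"
      have X0: "0 < X" using D0 G0 e0 by (simp add: X_def)
      have TX: "T = X powr 2" using powr_realpow[OF X0, of 2] by (simp add: T_def X_def)
      have "T powr (- 1 / 2) = X powr (2 * (- 1 / 2))" by (simp only: TX powr_powr)
      also have "\<dots> = 1 / X" using powr_minus_divide[of X 1] X0 by simp
      finally show ?thesis by (simp add: X_def)
    qed
    have bias: "C\<alpha> * real (N L) powr (- \<alpha>) \<le> \<epsilon> / 4"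
    proof -
      have "real (N L) powr (- \<alpha>) \<le> (c1 * A ^ L) powr (- \<alpha>)"
        using Nb[OF L1] pa c by (intro powr_mono2') auto
      then show ?thesis using Lb pa by (smt (verit) mult_left_mono)
    qed
    have stat_l: "R * C\<beta> * real (M l) powr (- 1 / 2) * real (N l) powr (- \<beta>) \<le> D * T powr (- 1 / 2) * y ^ l"
      if l: "1 \<le> l" for l
    proof -
      have m1: "real (M l) powr (- 1 / 2) \<le> (T * v ^ l) powr (- 1 / 2)"
        using Mge[of l] Tv0[of l] by (intro powr_mono2') auto
      have m2: "(T * v ^ l) powr (- 1 / 2) = T powr (- 1 / 2) * (v powr (- 1 / 2)) ^ l"
        using T0 v0 by (simp add: powr_mult pow_powr)
      have n1: "real (N l) powr (- \<beta>) \<le> (c1 * A ^ l) powr (- \<beta>)"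
        using Nb[OF l] pa c by (intro powr_mono2') auto
      have n2: "(c1 * A ^ l) powr (- \<beta>) = c1 powr (- \<beta>) * (A powr (- \<beta>)) ^ l"
        using c A0 by (simp add: powr_mult pow_powr)
      have "R * C\<beta> * real (M l) powr (- 1 / 2) * real (N l) powr (- \<beta>)
          \<le> R * C\<beta> * (T powr (- 1 / 2) * (v powr (- 1 / 2)) ^ l) * (c1 powr (- \<beta>) * (A powr (- \<beta>)) ^ l)"
        using m1 n1 R pa unfolding m2 n2 by (intro mult_mono mult_left_mono) auto
      also have "\<dots> = D * T powr (- 1 / 2) * (v powr (- 1 / 2) * A powr (- \<beta>)) ^ l"
        by (simp add: D_def power_mult_distrib)
      also have "\<dots> = D * T powr (- 1 / 2) * y ^ l" by (simp only: vy)
      finally show ?thesis .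
    qed
    have stat: "(\<Sum>l=1..L. R * C\<beta> * real (M l) powr (- 1 / 2) * real (N l) powr (- \<beta>)) \<le> \<epsilon> / 4"
    proof -
      have "(\<Sum>l=1..L. R * C\<beta> * real (M l) powr (- 1 / 2) * real (N l) powr (- \<beta>)) \<le> (\<Sum>l=1..L. D * T powr (- 1 / 2) * y ^ l)"
        by (intro sum_mono stat_l) auto
      also have "\<dots> = D * T powr (- 1 / 2) * G" by (simp add: G_def sum_distrib_left)
      also have "\<dots> = \<epsilon> / 4" unfolding Tpow using D0 G0 by simp
      finally show ?thesis .
    qed
    have cost_l: "real (M l) * Cost l \<le> C\<gamma> * c2 powr \<gamma> * (T * y ^ l + g ^ l)" if l: "1 \<le> l" for l
    proof -
      have "Cost l \<le> C\<gamma> * real (N l) powr \<gamma>" by (rule cost[OF l])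
      also have "real (N l) powr \<gamma> \<le> (c2 * A ^ l) powr \<gamma>"
        using Nb[OF l] pa c by (intro powr_mono2) auto
      also have "(c2 * A ^ l) powr \<gamma> = c2 powr \<gamma> * g ^ l" using c A0 by (simp add: powr_mult pow_powr g_def)
      finally have "Cost l \<le> C\<gamma> * (c2 powr \<gamma> * g ^ l)" using pa by simp
      then have "real (M l) * Cost l \<le> real (M l) * (C\<gamma> * (c2 powr \<gamma> * g ^ l))"
        by (intro mult_left_mono) auto
      also have "\<dots> \<le> (T * v ^ l + 1) * (C\<gamma> * (c2 powr \<gamma> * g ^ l))"
        using Mle[of l] pa g1 by (intro mult_right_mono) auto
      also have "\<dots> = C\<gamma> * c2 powr \<gamma> * (T * (v * g) ^ l + g ^ l)"
        by (simp add: algebra_simps power_mult_distrib)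
      finally show ?thesis by (simp add: vg)
    qed
    have sumg: "(\<Sum>l=1..L. g ^ l) \<le> g / (g - 1) * B0 powr \<gamma> * \<epsilon> powr (- \<gamma> / \<alpha>)"
    proof -
      have s1: "(\<Sum>l=1..L. g ^ l) \<le> g / (g - 1) * g ^ L"
        using geo_gt1[OF g1, of L] by simp
      have "g ^ L = (A ^ L) powr \<gamma>" using A0 by (simp add: pow_powr g_def)
      also have "\<dots> \<le> (B0 * \<epsilon> powr (- 1 / \<alpha>)) powr \<gamma>" using AL pa A0 by (intro powr_mono2) auto
      also have "\<dots> = B0 powr \<gamma> * \<epsilon> powr (- \<gamma> / \<alpha>)" using B0 e0 by (simp add: powr_mult powr_powr)
      finally have s2: "g ^ L \<le> B0 powr \<gamma> * \<epsilon> powr (- \<gamma> / \<alpha>)" .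
      have "g / (g - 1) * g ^ L \<le> g / (g - 1) * (B0 powr \<gamma> * \<epsilon> powr (- \<gamma> / \<alpha>))"
        using s2 g1 by (intro mult_left_mono) auto
      then show ?thesis using s1 by (simp add: mult.assoc)
    qed
    have G3: "G ^ 3 \<le> Kc * F \<epsilon>"
    proof -
      consider "\<beta> > \<gamma> / 2" | "\<beta> = \<gamma> / 2" | "\<beta> < \<gamma> / 2" by linarith
      then show ?thesis
      proof cases
        case 1
        then have y1: "y < 1" using pa by (simp add: y_def \<rho>_def powr_less_one)
        have "G \<le> y / (1 - y)" unfolding G_def by (rule geo_lt1[OF y0 y1])
        then have "G ^ 3 \<le> (y / (1 - y)) ^ 3" using G0 by (intro power_mono) auto
        then show ?thesis using 1 by (simp add: Kc_def F_def)
      next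
        case 2
        then have "\<rho> = 0" by (simp add: \<rho>_def)
        then have "y = 1" using A0 by (simp add: y_def)
        then have GL: "G = real L" by (simp add: G_def)
        have le: "log A \<epsilon> \<le> - log A 2"
        proof -
          have "log A \<epsilon> \<le> log A (1 / 2)" using e0 e2 pa by (simp add: log_le_cancel_iff)
          also have "\<dots> = - log A 2" using pa by (simp add: log_divide)
          finally show ?thesis .
        qed
        then have abs: "\<bar>log A \<epsilon>\<bar> = - log A \<epsilon>" using log2 by simp
        have "real L = log A (A ^ L)" using pa by (simp add: log_nat_power)
        also have "\<dots> \<le> log A (B0 * \<epsilon> powr (- 1 / \<alpha>))"
          by (rule iffD2[OF log_le_cancel_iff]) (use AL pa B0 e0 in auto)
        also have "\<dots> = log A B0 + (- 1 / \<alpha>) * log A \<epsilon>" using B0 e0 pa by (simp add: log_mult log_powr)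
        also have "\<dots> = log A B0 + (1 / \<alpha>) * \<bar>log A \<epsilon>\<bar>" using abs by simp
        also have "log A B0 \<le> (log A B0 / log A 2) * \<bar>log A \<epsilon>\<bar>"
        proof -
          have "log A 2 \<le> \<bar>log A \<epsilon>\<bar>" using le abs by simp
          then have "(log A B0 / log A 2) * log A 2 \<le> (log A B0 / log A 2) * \<bar>log A \<epsilon>\<bar>"
            using logB0 log2 by (intro mult_left_mono) auto
          then show ?thesis using log2 by simp
        qed
        finally have "real L \<le> c3 * \<bar>log A \<epsilon>\<bar>" by (simp add: c3_def algebra_simps)
        then have "(real L) ^ 3 \<le> (c3 * \<bar>log A \<epsilon>\<bar>) ^ 3" by (intro power_mono) auto
        then show ?thesis using 2 GL by (simp add: Kc_def F_def power_mult_distrib)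
      next
        case 3
        then have y1: "1 < y" using pa by (simp add: y_def \<rho>_def)
        have s1: "G \<le> y / (y - 1) * y ^ L" using geo_gt1[OF y1, of L] by (simp add: G_def)
        have "y ^ L = (A ^ L) powr \<rho>" using A0 by (simp add: pow_powr y_def)
        also have "\<dots> \<le> (B0 * \<epsilon> powr (- 1 / \<alpha>)) powr \<rho>" using AL A0 3 by (intro powr_mono2) (auto simp: \<rho>_def)
        also have "\<dots> = B0 powr \<rho> * \<epsilon> powr (- \<rho> / \<alpha>)" using B0 e0 by (simp add: powr_mult powr_powr)
        finally have s2: "y ^ L \<le> B0 powr \<rho> * \<epsilon> powr (- \<rho> / \<alpha>)" .
        have "y / (y - 1) * y ^ L \<le> y / (y - 1) * (B0 powr \<rho> * \<epsilon> powr (- \<rho> / \<alpha>))"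
          using s2 y1 by (intro mult_left_mono) auto
        then have "G \<le> y * B0 powr \<rho> / (y - 1) * \<epsilon> powr (- \<rho> / \<alpha>)" using s1 by simp
        then have "G ^ 3 \<le> (y * B0 powr \<rho> / (y - 1) * \<epsilon> powr (- \<rho> / \<alpha>)) ^ 3"
          using G0 by (intro power_mono) auto
        also have "\<dots> = (y * B0 powr \<rho> / (y - 1)) ^ 3 * (\<epsilon> powr (- \<rho> / \<alpha>)) ^ 3" by (simp only: power_mult_distrib)
        also have "(\<epsilon> powr (- \<rho> / \<alpha>)) ^ 3 = \<epsilon> powr (- (\<gamma> - 2 * \<beta>) / \<alpha>)"
        proof -
          have ex: "- \<rho> / \<alpha> * real 3 = - (\<gamma> - 2 * \<beta>) / \<alpha>" using pa by (simp add: \<rho>_def field_simps)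
          have "(\<epsilon> powr (- \<rho> / \<alpha>)) ^ 3 = (\<epsilon> powr (- \<rho> / \<alpha>)) powr (real 3)"
            using e0 by (simp only: powr_realpow powr_gt_zero)
          also have "\<dots> = \<epsilon> powr (- \<rho> / \<alpha> * real 3)" by (simp only: powr_powr)
          finally show ?thesis by (simp only: ex)
        qed
        finally show ?thesis using 3 by (simp add: Kc_def F_def)
      qed
    qed
    have TG: "T * G = 16 * D\<^sup>2 * G ^ 3 * \<epsilon> powr (-2)"
      using e0 by (simp add: T_def powr_neg2 power2_eq_square power3_eq_cube field_simps)
    have costsum: "(\<Sum>l=1..L. real (M l) * Cost l)
        \<le> C\<gamma> * c2 powr \<gamma> * (16 * D\<^sup>2 * Kc * (F \<epsilon> * \<epsilon> powr (-2)) + g / (g - 1) * B0 powr \<gamma> * \<epsilon> powr (- \<gamma> / \<alpha>))"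
    proof -
      have "(\<Sum>l=1..L. real (M l) * Cost l) \<le> (\<Sum>l=1..L. C\<gamma> * c2 powr \<gamma> * (T * y ^ l + g ^ l))"
        by (intro sum_mono cost_l) auto
      also have "\<dots> = C\<gamma> * c2 powr \<gamma> * (T * G + (\<Sum>l=1..L. g ^ l))"
      proof -
        have "(\<Sum>l=1..L. C\<gamma> * c2 powr \<gamma> * (T * y ^ l + g ^ l)) = C\<gamma> * c2 powr \<gamma> * (\<Sum>l=1..L. T * y ^ l + g ^ l)"
          by (rule sum_distrib_left[symmetric])
        also have "(\<Sum>l=1..L. T * y ^ l + g ^ l) = (\<Sum>l=1..L. T * y ^ l) + (\<Sum>l=1..L. g ^ l)"
          by (rule sum.distrib)
        also have "(\<Sum>l=1..L. T * y ^ l) = T * G" unfolding G_def by (rule sum_distrib_left[symmetric])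
        finally show ?thesis .
      qed
      also have "\<dots> \<le> C\<gamma> * c2 powr \<gamma> * (16 * D\<^sup>2 * Kc * (F \<epsilon> * \<epsilon> powr (-2)) + g / (g - 1) * B0 powr \<gamma> * \<epsilon> powr (- \<gamma> / \<alpha>))"
      proof (rule mult_left_mono)
        show "T * G + (\<Sum>l=1..L. g ^ l) \<le> 16 * D\<^sup>2 * Kc * (F \<epsilon> * \<epsilon> powr (-2)) + g / (g - 1) * B0 powr \<gamma> * \<epsilon> powr (- \<gamma> / \<alpha>)"
        proof (rule add_mono)
          have "16 * D\<^sup>2 * G ^ 3 * \<epsilon> powr (-2) \<le> 16 * D\<^sup>2 * (Kc * F \<epsilon>) * \<epsilon> powr (-2)"
            using G3 by (intro mult_right_mono mult_left_mono) auto
          then show "T * G \<le> 16 * D\<^sup>2 * Kc * (F \<epsilon> * \<epsilon> powr (-2))" by (simp add: TG mult.assoc)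
          show "(\<Sum>l=1..L. g ^ l) \<le> g / (g - 1) * B0 powr \<gamma> * \<epsilon> powr (- \<gamma> / \<alpha>)" by (rule sumg)
        qed
        show "0 \<le> C\<gamma> * c2 powr \<gamma>" using pa by simp
      qed
      finally show ?thesis .
    qed
    have target: "16 * D\<^sup>2 * Kc * (F \<epsilon> * \<epsilon> powr (-2)) + g / (g - 1) * B0 powr \<gamma> * \<epsilon> powr (- \<gamma> / \<alpha>)
        \<le> (16 * D\<^sup>2 * Kc + g / (g - 1) * B0 powr \<gamma>) *
          (if \<beta> > \<gamma> / 2 then \<epsilon> powr (- \<gamma> / \<alpha>) + \<epsilon> powr (-2)
           else if \<beta> = \<gamma> / 2 then \<epsilon> powr (- \<gamma> / \<alpha>) + \<epsilon> powr (-2) * \<bar>log A \<epsilon>\<bar> ^ 3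
           else \<epsilon> powr (- \<gamma> / \<alpha>) + \<epsilon> powr (-2 - (\<gamma> - 2 * \<beta>) / \<alpha>))"
    proof -
      have Fe: "F \<epsilon> * \<epsilon> powr (-2) = (if \<beta> > \<gamma> / 2 then \<epsilon> powr (-2)
           else if \<beta> = \<gamma> / 2 then \<epsilon> powr (-2) * \<bar>log A \<epsilon>\<bar> ^ 3
           else \<epsilon> powr (-2 - (\<gamma> - 2 * \<beta>) / \<alpha>))"
      proof -
        consider "\<beta> > \<gamma> / 2" | "\<beta> = \<gamma> / 2" | "\<beta> < \<gamma> / 2" by linarith
        then show ?thesis
        proof cases
          case 3
          have "\<epsilon> powr (- (\<gamma> - 2 * \<beta>) / \<alpha>) * \<epsilon> powr (-2) = \<epsilon> powr (- (\<gamma> - 2 * \<beta>) / \<alpha> + -2)"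
            by (simp only: powr_add)
          also have "- (\<gamma> - 2 * \<beta>) / \<alpha> + -2 = -2 - (\<gamma> - 2 * \<beta>) / \<alpha>" by (simp add: minus_divide_left)
          finally show ?thesis using 3 by (simp add: F_def)
        qed (simp_all add: F_def mult.commute)
      qed
      define X where "X = \<epsilon> powr (- \<gamma> / \<alpha>)"
      define Y where "Y = F \<epsilon> * \<epsilon> powr (-2)"
      have X0: "0 \<le> X" and Y0: "0 \<le> Y" using e0 by (auto simp: X_def Y_def F_def)
      have a0: "0 \<le> 16 * D\<^sup>2 * Kc" and b0: "0 \<le> g / (g - 1) * B0 powr \<gamma>" using Kc0 g1 by auto
      have "16 * D\<^sup>2 * Kc * Y + g / (g - 1) * B0 powr \<gamma> * X \<le> (16 * D\<^sup>2 * Kc + g / (g - 1) * B0 powr \<gamma>) * (X + Y)"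
      proof -
        define a where "a = 16 * D\<^sup>2 * Kc"
        define b where "b = g / (g - 1) * B0 powr \<gamma>"
        have "0 \<le> a" "0 \<le> b" using a0 b0 by (simp_all add: a_def b_def)
        then have "0 \<le> a * X" "0 \<le> b * Y" using X0 Y0 by simp_all
        moreover have "(a + b) * (X + Y) = a * Y + b * X + (a * X + b * Y)" by (simp add: algebra_simps)
        ultimately show ?thesis unfolding a_def[symmetric] b_def[symmetric] by linarith
      qed
      moreover have "(if \<beta> > \<gamma> / 2 then \<epsilon> powr (- \<gamma> / \<alpha>) + \<epsilon> powr (-2)
           else if \<beta> = \<gamma> / 2 then \<epsilon> powr (- \<gamma> / \<alpha>) + \<epsilon> powr (-2) * \<bar>log A \<epsilon>\<bar> ^ 3
           else \<epsilon> powr (- \<gamma> / \<alpha>) + \<epsilon> powr (-2 - (\<gamma> - 2 * \<beta>) / \<alpha>)) = X + Y"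
        unfolding X_def Y_def Fe by auto
      ultimately show ?thesis by (simp add: X_def Y_def)
    qed
    show "\<exists>L M. 1 \<le> L \<and> (\<forall>l\<in>{1..L}. 1 \<le> M l) \<and>
      C\<alpha> * real (N L) powr (- \<alpha>) + (\<Sum>l=1..L. R * C\<beta> * real (M l) powr (- 1 / 2) * real (N l) powr (- \<beta>)) < \<epsilon> \<and>
      (\<Sum>l=1..L. real (M l) * Cost l) \<le> K *
          (if \<beta> > \<gamma> / 2 then \<epsilon> powr (- \<gamma> / \<alpha>) + \<epsilon> powr (-2)
           else if \<beta> = \<gamma> / 2 then \<epsilon> powr (- \<gamma> / \<alpha>) + \<epsilon> powr (-2) * \<bar>log A \<epsilon>\<bar> ^ 3
           else \<epsilon> powr (- \<gamma> / \<alpha>) + \<epsilon> powr (-2 - (\<gamma> - 2 * \<beta>) / \<alpha>))"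
    proof (intro exI conjI)
      show "1 \<le> L" by fact
      show "\<forall>l\<in>{1..L}. 1 \<le> M l" using M1 by auto
      show "C\<alpha> * real (N L) powr (- \<alpha>) + (\<Sum>l=1..L. R * C\<beta> * real (M l) powr (- 1 / 2) * real (N l) powr (- \<beta>)) < \<epsilon>"
        using bias stat e0 by linarith
      have "(\<Sum>l=1..L. real (M l) * Cost l) \<le> C\<gamma> * c2 powr \<gamma> * ((16 * D\<^sup>2 * Kc + g / (g - 1) * B0 powr \<gamma>) *
          (if \<beta> > \<gamma> / 2 then \<epsilon> powr (- \<gamma> / \<alpha>) + \<epsilon> powr (-2)
           else if \<beta> = \<gamma> / 2 then \<epsilon> powr (- \<gamma> / \<alpha>) + \<epsilon> powr (-2) * \<bar>log A \<epsilon>\<bar> ^ 3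
           else \<epsilon> powr (- \<gamma> / \<alpha>) + \<epsilon> powr (-2 - (\<gamma> - 2 * \<beta>) / \<alpha>)))"
        by (rule order_trans[OF costsum mult_left_mono[OF target]]) (use pa c in simp)
      then show "(\<Sum>l=1..L. real (M l) * Cost l) \<le> K *
          (if \<beta> > \<gamma> / 2 then \<epsilon> powr (- \<gamma> / \<alpha>) + \<epsilon> powr (-2)
           else if \<beta> = \<gamma> / 2 then \<epsilon> powr (- \<gamma> / \<alpha>) + \<epsilon> powr (-2) * \<bar>log A \<epsilon>\<bar> ^ 3
           else \<epsilon> powr (- \<gamma> / \<alpha>) + \<epsilon> powr (-2 - (\<gamma> - 2 * \<beta>) / \<alpha>))"
        by (simp add: K_def mult.assoc)
    qed
  qed
qed

lemma jm_case: "jointly_measurable P S Y \<Longrightarrow> (\<lambda>x. Y (fst x) (snd x)) \<in> borel_measurable (P \<Otimes>\<^sub>M S)"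
  unfolding jointly_measurable_def by (simp add: case_prod_beta')

lemma jm_sec: "jointly_measurable P S Y \<Longrightarrow> \<omega> \<in> space P \<Longrightarrow> Y \<omega> \<in> borel_measurable S"
  unfolding jointly_measurable_def using measurable_Pair2 by fastforce

lemma jm_sec2: "jointly_measurable P S Y \<Longrightarrow> s \<in> space S \<Longrightarrow> (\<lambda>\<omega>. Y \<omega> s) \<in> borel_measurable P"
  unfolding jointly_measurable_def using measurable_Pair1 by fastforce

lemma jm_expec:
  assumes "sigma_finite_measure P" "jointly_measurable P S Y"
  shows "expec P Y \<in> borel_measurable S"
proof -
  have "(\<lambda>(s, \<omega>). Y \<omega> s) \<in> borel_measurable (S \<Otimes>\<^sub>M P)"
    using measurable_pair_swap[OF assms(2)[unfolded jointly_measurable_def]] by simp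
  from sigma_finite_measure.borel_measurable_lebesgue_integral[OF assms(1) this]
  show ?thesis by (simp add: expec_def)
qed

lemma Lp_norm_meas:
  assumes "sigma_finite_measure S" "jointly_measurable P S Y"
  shows "(\<lambda>\<omega>. Lp_norm S p (Y \<omega>)) \<in> borel_measurable P"
proof -
  have "(\<lambda>(\<omega>, s). ennreal (\<bar>Y \<omega> s\<bar> powr p)) \<in> borel_measurable (P \<Otimes>\<^sub>M S)"
    using jm_case[OF assms(2)] by (simp add: case_prod_beta')
  from sigma_finite_measure.borel_measurable_nn_integral[OF assms(1) this]
  show ?thesis unfolding Lp_norm_def by (intro measurable_epowr) simp
qed

lemma enorm_meas2:
  fixes G :: "'a \<Rightarrow> 'b \<Rightarrow> ennreal"
  assumes "sigma_finite_measure P" "(\<lambda>(\<omega>, s). G \<omega> s) \<in> borel_measurable (P \<Otimes>\<^sub>M S)"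
  shows "(\<lambda>s. enorm P r (\<lambda>\<omega>. G \<omega> s)) \<in> borel_measurable S"
proof -
  have "(\<lambda>(s, \<omega>). epowr (G \<omega> s) r) \<in> borel_measurable (S \<Otimes>\<^sub>M P)"
    using measurable_pair_swap[OF assms(2)] by (simp add: case_prod_beta' measurable_epowr)
  from sigma_finite_measure.borel_measurable_nn_integral[OF assms(1) this]
  show ?thesis unfolding enorm_def by (intro measurable_epowr) simp
qed

lemma mixed_minkowski:
  fixes p q :: real and P :: "'w measure" and S :: "'s measure" and G :: "'w \<Rightarrow> 's \<Rightarrow> ennreal"
  assumes P: "finite_measure P" and S: "sigma_finite_measure S" and p: "1 \<le> p" "p \<le> q"
    and G: "(\<lambda>(\<omega>, s). G \<omega> s) \<in> borel_measurable (P \<Otimes>\<^sub>M S)"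
  shows "enorm P q (\<lambda>\<omega>. enorm S p (G \<omega>)) \<le> enorm S p (\<lambda>s. enorm P q (\<lambda>\<omega>. G \<omega> s))"
proof -
  define r where "r = q / p"
  have r: "1 \<le> r" using p by (simp add: r_def)
  have p0: "0 < p" and q0: "0 < q" using p by auto
  define H where "H \<omega> s = epowr (G \<omega> s) p" for \<omega> s
  have H: "(\<lambda>(\<omega>, s). H \<omega> s) \<in> borel_measurable (P \<Otimes>\<^sub>M S)"
    using G unfolding H_def by (simp add: case_prod_beta' measurable_epowr)
  have lhs: "enorm P q (\<lambda>\<omega>. enorm S p (G \<omega>)) = epowr (enorm P r (\<lambda>\<omega>. \<integral>\<^sup>+s. H \<omega> s \<partial>S)) (1 / p)"
  proof -
    have "enorm P q (\<lambda>\<omega>. enorm S p (G \<omega>)) = epowr (\<integral>\<^sup>+\<omega>. epowr (\<integral>\<^sup>+s. H \<omega> s \<partial>S) r \<partial>P) (1 / q)"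
      using p0 q0 by (simp add: enorm_def H_def epowr_epowr r_def)
    also have "\<dots> = epowr (enorm P r (\<lambda>\<omega>. \<integral>\<^sup>+s. H \<omega> s \<partial>S)) (1 / p)"
      using p0 q0 by (simp add: enorm_def epowr_epowr r_def)
    finally show ?thesis .
  qed
  have rhs: "enorm S p (\<lambda>s. enorm P q (\<lambda>\<omega>. G \<omega> s)) = epowr (\<integral>\<^sup>+s. enorm P r (\<lambda>\<omega>. H \<omega> s) \<partial>S) (1 / p)"
  proof -
    have "epowr (enorm P q (\<lambda>\<omega>. G \<omega> s)) p = enorm P r (\<lambda>\<omega>. H \<omega> s)" for s
    proof -
      have "epowr (enorm P q (\<lambda>\<omega>. G \<omega> s)) p = epowr (\<integral>\<^sup>+\<omega>. epowr (G \<omega> s) q \<partial>P) (1 / r)"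
        using p0 q0 by (simp add: enorm_def epowr_epowr r_def)
      also have "(\<lambda>\<omega>. epowr (G \<omega> s) q) = (\<lambda>\<omega>. epowr (H \<omega> s) r)"
        using p0 q0 by (simp add: H_def epowr_epowr r_def)
      finally show ?thesis by (simp add: enorm_def)
    qed
    then show ?thesis by (simp add: enorm_def)
  qed
  show ?thesis unfolding lhs rhs
    using minkowski_integral[OF P S r H] p0 by (intro epowr_mono) auto
qed

lemma (in prob_space) distr_eq_transfer:
  fixes U V :: "'a \<Rightarrow> real"
  assumes U: "U \<in> borel_measurable M" and V: "V \<in> borel_measurable M"
    and eq: "distr M borel U = distr M borel V"
  shows "integrable M U \<longleftrightarrow> integrable M V"
    and "integrable M V \<Longrightarrow> expectation U = expectation V"
    and "\<And>f. f \<in> borel_measurable borel \<Longrightarrow> (\<integral>\<^sup>+x. f (U x) \<partial>M) = (\<integral>\<^sup>+x. f (V x) \<partial>M)"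
proof -
  have "integrable M U \<longleftrightarrow> integrable (distr M borel U) (\<lambda>x. x)"
    using integrable_distr_eq[OF U, of "\<lambda>x. x"] by simp
  also have "\<dots> \<longleftrightarrow> integrable (distr M borel V) (\<lambda>x. x)" by (simp add: eq)
  also have "\<dots> \<longleftrightarrow> integrable M V" using integrable_distr_eq[OF V, of "\<lambda>x. x"] by simp
  finally show "integrable M U \<longleftrightarrow> integrable M V" .
  show "expectation U = expectation V" if "integrable M V"
  proof -
    have "expectation U = integral\<^sup>L (distr M borel U) (\<lambda>x. x)" using integral_distr[OF U, of "\<lambda>x. x"] by simp
    also have "\<dots> = integral\<^sup>L (distr M borel V) (\<lambda>x. x)" by (simp add: eq)
    also have "\<dots> = expectation V" using integral_distr[OF V, of "\<lambda>x. x"] by simp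
    finally show ?thesis .
  qed
  fix f :: "real \<Rightarrow> ennreal" assume f: "f \<in> borel_measurable borel"
  have "(\<integral>\<^sup>+x. f (U x) \<partial>M) = integral\<^sup>N (distr M borel U) f" using nn_integral_distr[OF U, of f] f by simp
  also have "\<dots> = integral\<^sup>N (distr M borel V) f" by (simp add: eq)
  also have "\<dots> = (\<integral>\<^sup>+x. f (V x) \<partial>M)" using nn_integral_distr[OF V, of f] f by simp
  finally show "(\<integral>\<^sup>+x. f (U x) \<partial>M) = (\<integral>\<^sup>+x. f (V x) \<partial>M)" .
qed

lemma mz_const_pos: "2 \<le> q \<Longrightarrow> 0 < mz_const q"
  using sc_const_ge[of q] by (simp add: mz_const_def max_def)

lemma pointwise_level:
  fixes P :: "'w measure" and S :: "'s measure" and Y :: "'w \<Rightarrow> 's \<Rightarrow> real" and m :: "'s \<Rightarrow> real"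
    and \<xi> :: "nat \<Rightarrow> 'w \<Rightarrow> 's \<Rightarrow> real" and q :: real and Mn :: nat and s :: 's
  assumes P: "prob_space P" and q: "2 \<le> q"
    and Yj: "jointly_measurable P S Y"
    and \<xi>j: "\<And>j. jointly_measurable P S (\<xi> j)"
    and ind: "prob_space.indep_vars P (\<lambda>_. PiM (space S) (\<lambda>_. borel)) (\<lambda>j \<omega>. restrict (\<xi> j \<omega>) (space S)) UNIV"
    and lw: "\<And>j. law P S (\<xi> j) = law P S Y"
    and s: "s \<in> space S" and intY: "integrable P (\<lambda>\<omega>. Y \<omega> s)" and eY: "(\<integral>\<omega>. Y \<omega> s \<partial>P) = m s"
    and Mn: "1 \<le> Mn"
  shows "enorm P q (\<lambda>\<omega>. ennreal \<bar>(1 / real Mn) * (\<Sum>j=1..Mn. \<xi> j \<omega> s - m s)\<bar>)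
     \<le> ennreal (mz_const q powr (1/q) * real Mn powr (-1/2)) * enorm P q (\<lambda>\<omega>. ennreal \<bar>Y \<omega> s - m s\<bar>)"
proof -
  interpret prob_space P by fact
  have q0: "0 < q" using q by simp
  define W where "W j \<omega> = \<xi> j \<omega> s - m s" for j \<omega>
  define V where "V \<omega> = Y \<omega> s - m s" for \<omega>
  define K where "K = mz_const q"
  have K0: "0 < K" using mz_const_pos[OF q] by (simp add: K_def)
  define c where "c = K powr (1/q) * real Mn powr (-1/2)"
  have c0: "0 < c" using K0 Mn by (simp add: c_def)
  have Wm[measurable]: "W j \<in> borel_measurable P" for j
    unfolding W_def using jm_sec2[OF \<xi>j s] by measurable
  have Vm[measurable]: "V \<in> borel_measurable P"
    unfolding V_def using jm_sec2[OF Yj s] by measurable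
  define ev where "ev f = f s - m s" for f :: "'s \<Rightarrow> real"
  have evm: "ev \<in> measurable (PiM (space S) (\<lambda>_. borel)) borel"
    unfolding ev_def using s by measurable
  have rm: "(\<lambda>\<omega>. restrict (Z \<omega>) (space S)) \<in> measurable P (PiM (space S) (\<lambda>_. borel))"
    if "jointly_measurable P S Z" for Z :: "'w \<Rightarrow> 's \<Rightarrow> real"
    by (rule measurable_restrict) (use jm_sec2[OF that] in auto)
  have dW: "distr P borel (W j) = distr P borel V" for j
  proof -
    have "distr P borel (W j) = distr P borel (ev \<circ> (\<lambda>\<omega>. restrict (\<xi> j \<omega>) (space S)))"
      using s by (intro distr_cong) (auto simp: W_def ev_def)
    also have "\<dots> = distr (law P S (\<xi> j)) borel ev"
      unfolding law_def by (rule distr_distr[OF evm rm[OF \<xi>j], symmetric])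
    also have "\<dots> = distr (law P S Y) borel ev" by (simp add: lw)
    also have "\<dots> = distr P borel (ev \<circ> (\<lambda>\<omega>. restrict (Y \<omega>) (space S)))"
      unfolding law_def by (rule distr_distr[OF evm rm[OF Yj]])
    also have "\<dots> = distr P borel V"
      using s by (intro distr_cong) (auto simp: V_def ev_def)
    finally show ?thesis .
  qed
  have intV: "integrable P V" unfolding V_def using intY by simp
  have eV: "expectation V = 0" unfolding V_def using intY eY by (simp add: prob_space)
  have intW: "integrable P (W j)" for j using distr_eq_transfer(1)[OF Wm Vm dW] intV by simp
  have eW: "expectation (W j) = 0" for j using distr_eq_transfer(2)[OF Wm Vm dW intV] eV by simp
  have fq: "(\<lambda>x::real. ennreal (\<bar>x\<bar> powr q)) \<in> borel_measurable borel" by measurable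
  have momW: "(\<integral>\<^sup>+\<omega>. ennreal (\<bar>W j \<omega>\<bar> powr q) \<partial>P) = (\<integral>\<^sup>+\<omega>. ennreal (\<bar>V \<omega>\<bar> powr q) \<partial>P)" for j
    using distr_eq_transfer(3)[OF Wm Vm dW fq] by simp
  have indW: "indep_vars (\<lambda>_. borel) W UNIV"
  proof -
    have "indep_vars (\<lambda>_. borel) (\<lambda>j \<omega>. ev (restrict (\<xi> j \<omega>) (space S))) UNIV"
      by (rule indep_vars_compose2[OF ind]) (use evm in auto)
    moreover have "(\<lambda>j \<omega>. ev (restrict (\<xi> j \<omega>) (space S))) = W"
      using s by (auto simp: fun_eq_iff W_def ev_def)
    ultimately show ?thesis by simp
  qed
  have lhs_eq: "enorm P q (\<lambda>\<omega>. ennreal \<bar>(1 / real Mn) * (\<Sum>j=1..Mn. \<xi> j \<omega> s - m s)\<bar>)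
      = ennreal (1 / real Mn) * enorm P q (\<lambda>\<omega>. ennreal \<bar>\<Sum>j=1..Mn. W j \<omega>\<bar>)"
  proof -
    have "(\<lambda>\<omega>. ennreal \<bar>(1 / real Mn) * (\<Sum>j=1..Mn. \<xi> j \<omega> s - m s)\<bar>) = (\<lambda>\<omega>. ennreal (1 / real Mn) * ennreal \<bar>\<Sum>j=1..Mn. W j \<omega>\<bar>)"
    proof
      fix \<omega>
      have e: "(\<Sum>j=1..Mn. \<xi> j \<omega> s - m s) = (\<Sum>j=1..Mn. W j \<omega>)" by (simp add: W_def)
      show "ennreal \<bar>(1 / real Mn) * (\<Sum>j=1..Mn. \<xi> j \<omega> s - m s)\<bar> = ennreal (1 / real Mn) * ennreal \<bar>\<Sum>j=1..Mn. W j \<omega>\<bar>"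
        unfolding e using ennreal_mult[of "1 / real Mn" "\<bar>\<Sum>j=1..Mn. W j \<omega>\<bar>"] by (simp add: abs_mult)
    qed
    then show ?thesis using q0 by (simp add: enorm_cmult)
  qed
  have normV: "enorm P q (\<lambda>\<omega>. ennreal \<bar>V \<omega>\<bar>) = epowr (\<integral>\<^sup>+\<omega>. ennreal (\<bar>V \<omega>\<bar> powr q) \<partial>P) (1 / q)"
    by (simp add: enorm_def epowr_ennreal)
  show ?thesis
  proof (cases "(\<integral>\<^sup>+\<omega>. ennreal (\<bar>V \<omega>\<bar> powr q) \<partial>P)" rule: ennreal_cases)
    case top
    then have "enorm P q (\<lambda>\<omega>. ennreal \<bar>Y \<omega> s - m s\<bar>) = \<top>" using normV by (simp add: V_def)
    then show ?thesis using c0 K0 Mn by (simp add: c_def K_def ennreal_mult_top)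
  next
    case (real mq)
    have mq0: "0 \<le> mq" by fact
    have MZ: "(\<integral>\<^sup>+\<omega>. ennreal (\<bar>\<Sum>j\<in>{1..Mn}. W j \<omega>\<bar> powr q) \<partial>P) \<le> ennreal (K * real (card {1..Mn}) powr (q / 2) * mq)"
      unfolding K_def
      by (rule mz_ineq[OF q indW intW eW _ mq0]) (use momW real in auto)
    have "enorm P q (\<lambda>\<omega>. ennreal \<bar>\<Sum>j=1..Mn. W j \<omega>\<bar>) = epowr (\<integral>\<^sup>+\<omega>. ennreal (\<bar>\<Sum>j\<in>{1..Mn}. W j \<omega>\<bar> powr q) \<partial>P) (1 / q)"
      by (simp add: enorm_def epowr_ennreal)
    also have "\<dots> \<le> epowr (ennreal (K * real Mn powr (q / 2) * mq)) (1 / q)"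
      using MZ q0 by (intro epowr_mono) auto
    also have "\<dots> = ennreal (K powr (1 / q) * real Mn powr (1 / 2) * mq powr (1 / q))"
    proof -
      have "(K * real Mn powr (q / 2) * mq) powr (1 / q) = K powr (1 / q) * (real Mn powr (q / 2)) powr (1 / q) * mq powr (1 / q)"
        using K0 mq0 by (simp add: powr_mult)
      also have "(real Mn powr (q / 2)) powr (1 / q) = real Mn powr (1 / 2)" using q0 by (simp add: powr_powr)
      finally show ?thesis using K0 mq0 by (simp add: epowr_ennreal)
    qed
    finally have A: "enorm P q (\<lambda>\<omega>. ennreal \<bar>\<Sum>j=1..Mn. W j \<omega>\<bar>) \<le> ennreal (K powr (1 / q) * real Mn powr (1 / 2) * mq powr (1 / q))" .
    have "enorm P q (\<lambda>\<omega>. ennreal \<bar>(1 / real Mn) * (\<Sum>j=1..Mn. \<xi> j \<omega> s - m s)\<bar>)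
        \<le> ennreal (1 / real Mn) * ennreal (K powr (1 / q) * real Mn powr (1 / 2) * mq powr (1 / q))"
      unfolding lhs_eq using A by (intro mult_left_mono) auto
    also have "\<dots> = ennreal (c * mq powr (1 / q))"
    proof -
      have "1 / real Mn * real Mn powr (1 / 2) = real Mn powr (- 1 / 2)"
      proof -
        have "real Mn powr (- 1 / 2) = real Mn powr (1 / 2 - 1)" by simp
        also have "\<dots> = real Mn powr (1 / 2) / real Mn powr 1" by (rule powr_diff)
        also have "real Mn powr 1 = real Mn" using Mn by simp
        finally show ?thesis by simp
      qed
      then have "1 / real Mn * (K powr (1 / q) * real Mn powr (1 / 2) * mq powr (1 / q)) = c * mq powr (1 / q)"
      proof -
        assume h: "1 / real Mn * real Mn powr (1 / 2) = real Mn powr (- 1 / 2)"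
        have "1 / real Mn * (K powr (1 / q) * real Mn powr (1 / 2) * mq powr (1 / q))
            = K powr (1 / q) * (1 / real Mn * real Mn powr (1 / 2)) * mq powr (1 / q)" by simp
        also have "\<dots> = K powr (1 / q) * real Mn powr (- 1 / 2) * mq powr (1 / q)" by (simp only: h)
        finally show ?thesis by (simp add: c_def)
      qed
      then show ?thesis using Mn by (simp add: ennreal_mult[symmetric] del: ennreal_mult)
    qed
    also have "\<dots> = ennreal c * enorm P q (\<lambda>\<omega>. ennreal \<bar>Y \<omega> s - m s\<bar>)"
      using normV real c0 mq0 by (simp add: V_def epowr_ennreal ennreal_mult)
    finally show ?thesis by (simp add: c_def K_def)
  qed
qed

lemma level_bound:
  fixes P :: "'w measure" and S :: "'s measure" and Y :: "'w \<Rightarrow> 's \<Rightarrow> real" and m :: "'s \<Rightarrow> real"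
    and \<xi> :: "nat \<Rightarrow> 'w \<Rightarrow> 's \<Rightarrow> real" and p q :: real and Mn :: nat
  assumes P: "prob_space P" and S: "sigma_finite_measure S" and q: "2 \<le> q" and p: "1 \<le> p" "p \<le> q"
    and Yj: "jointly_measurable P S Y" and mm: "m \<in> borel_measurable S"
    and \<xi>j: "\<And>j. jointly_measurable P S (\<xi> j)"
    and ind: "prob_space.indep_vars P (\<lambda>_. PiM (space S) (\<lambda>_. borel)) (\<lambda>j \<omega>. restrict (\<xi> j \<omega>) (space S)) UNIV"
    and lw: "\<And>j. law P S (\<xi> j) = law P S Y"
    and good: "AE s in S. integrable P (\<lambda>\<omega>. Y \<omega> s) \<and> (\<integral>\<omega>. Y \<omega> s \<partial>P) = m s"
    and Mn: "1 \<le> Mn"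
  shows "Lqp_norm P S q p (\<lambda>\<omega> s. (1 / real Mn) * (\<Sum>j=1..Mn. \<xi> j \<omega> s - m s))
     \<le> ennreal (mz_const q powr (1/q) * real Mn powr (-1/2)) * Lpq_norm P S p q (\<lambda>\<omega> s. Y \<omega> s - m s)"
proof -
  interpret prob_space P by fact
  have fP: "finite_measure P" by unfold_locales
  have sfP: "sigma_finite_measure P" by unfold_locales
  have p0: "0 < p" and q0: "0 < q" using p by auto
  define Z where "Z \<omega> s = (1 / real Mn) * (\<Sum>j=1..Mn. \<xi> j \<omega> s - m s)" for \<omega> s
  define c where "c = mz_const q powr (1/q) * real Mn powr (-1/2)"
  have c0: "0 \<le> c" by (simp add: c_def)
  have \<xi>m[measurable]: "(\<lambda>x. \<xi> j (fst x) (snd x)) \<in> borel_measurable (P \<Otimes>\<^sub>M S)" for j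
    using jm_case[OF \<xi>j] .
  have Ym[measurable]: "(\<lambda>x. Y (fst x) (snd x)) \<in> borel_measurable (P \<Otimes>\<^sub>M S)"
    using jm_case[OF Yj] .
  have mm'[measurable]: "m \<in> borel_measurable S" by fact
  have Zm: "(\<lambda>(\<omega>, s). ennreal \<bar>Z \<omega> s\<bar>) \<in> borel_measurable (P \<Otimes>\<^sub>M S)"
  proof -
    have "(\<lambda>x. ennreal \<bar>Z (fst x) (snd x)\<bar>) \<in> borel_measurable (P \<Otimes>\<^sub>M S)"
      unfolding Z_def by measurable
    then show ?thesis by (simp add: case_prod_beta')
  qed
  have Vm: "(\<lambda>(\<omega>, s). ennreal \<bar>Y \<omega> s - m s\<bar>) \<in> borel_measurable (P \<Otimes>\<^sub>M S)"
  proof -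
    have "(\<lambda>x. ennreal \<bar>Y (fst x) (snd x) - m (snd x)\<bar>) \<in> borel_measurable (P \<Otimes>\<^sub>M S)"
      by measurable
    then show ?thesis by (simp add: case_prod_beta')
  qed
  have "Lqp_norm P S q p Z = enorm P q (\<lambda>\<omega>. enorm S p (\<lambda>s. ennreal \<bar>Z \<omega> s\<bar>))"
    using p0 q0 by (simp add: Lqp_norm_enorm Lp_norm_enorm)
  also have "\<dots> \<le> enorm S p (\<lambda>s. enorm P q (\<lambda>\<omega>. ennreal \<bar>Z \<omega> s\<bar>))"
    by (rule mixed_minkowski[OF fP S p Zm])
  also have "\<dots> \<le> enorm S p (\<lambda>s. ennreal c * enorm P q (\<lambda>\<omega>. ennreal \<bar>Y \<omega> s - m s\<bar>))"
  proof (rule enorm_mono_AE[OF _ p0])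
    show "AE s in S. enorm P q (\<lambda>\<omega>. ennreal \<bar>Z \<omega> s\<bar>) \<le> ennreal c * enorm P q (\<lambda>\<omega>. ennreal \<bar>Y \<omega> s - m s\<bar>)"
      using good AE_space[of S]
    proof eventually_elim
      case (elim s)
      then show ?case unfolding Z_def c_def
        by (intro pointwise_level[OF P q Yj \<xi>j ind lw]) (use Mn in auto)
    qed
  qed
  also have "\<dots> = ennreal c * enorm S p (\<lambda>s. enorm P q (\<lambda>\<omega>. ennreal \<bar>Y \<omega> s - m s\<bar>))"
    by (rule enorm_cmult[OF c0 p0 enorm_meas2[OF sfP Vm]])
  also have "enorm S p (\<lambda>s. enorm P q (\<lambda>\<omega>. ennreal \<bar>Y \<omega> s - m s\<bar>)) = Lpq_norm P S p q (\<lambda>\<omega> s. Y \<omega> s - m s)"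
    using p0 q0 by (simp add: Lpq_norm_enorm)
  finally show ?thesis by (simp add: Z_def c_def)
qed

lemma tel_sum:
  fixes f :: "nat \<Rightarrow> real" and L :: nat
  shows "(\<Sum>l=1..L. f l - f (l - 1)) = f L - f 0"
  by (induction L) (auto simp: sum.cl_ivl_Suc)

lemma jm_zero: "jointly_measurable P S (\<lambda>\<omega> s. 0)"
  by (simp add: jointly_measurable_def)

lemma AE_integrable_of_Lpq:
  fixes P :: "'w measure" and S :: "'s measure" and Y :: "'w \<Rightarrow> 's \<Rightarrow> real"
  assumes P: "prob_space P" and p: "1 \<le> p" and q: "1 \<le> q"
    and Yj: "jointly_measurable P S Y" and fin: "Lpq_norm P S p q Y < \<infinity>"
  shows "AE s in S. integrable P (\<lambda>\<omega>. Y \<omega> s)"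
proof -
  interpret prob_space P by fact
  have sfP: "sigma_finite_measure P" by unfold_locales
  have Gm: "(\<lambda>(\<omega>, s). ennreal \<bar>Y \<omega> s\<bar>) \<in> borel_measurable (P \<Otimes>\<^sub>M S)"
    using jm_case[OF Yj] by (simp add: case_prod_beta')
  have "enorm S p (\<lambda>s. enorm P q (\<lambda>\<omega>. ennreal \<bar>Y \<omega> s\<bar>)) < \<top>"
    using fin p q by (simp add: Lpq_norm_enorm)
  from enorm_finite_AE[OF this enorm_meas2[OF sfP Gm]]
  have "AE s in S. enorm P q (\<lambda>\<omega>. ennreal \<bar>Y \<omega> s\<bar>) < \<top>" .
  then show ?thesis using AE_space[of S]
  proof eventually_elim
    case (elim s)
    have Ym: "(\<lambda>\<omega>. Y \<omega> s) \<in> borel_measurable P" using jm_sec2[OF Yj elim(2)] .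
    have "(\<integral>\<^sup>+\<omega>. epowr (ennreal \<bar>Y \<omega> s\<bar>) q \<partial>P) < \<top>"
      using elim(1) unfolding enorm_def by (metis epowr_eq_top_iff less_top)
    then have "(\<integral>\<^sup>+\<omega>. ennreal (\<bar>Y \<omega> s\<bar> powr q) \<partial>P) < \<top>" by (simp add: epowr_ennreal)
    then have iq: "integrable P (\<lambda>\<omega>. \<bar>Y \<omega> s\<bar> powr q)"
      by (intro integrableI_nonneg) (use Ym in auto)
    show "integrable P (\<lambda>\<omega>. Y \<omega> s)"
    proof (rule Bochner_Integration.integrable_bound[of _ "\<lambda>\<omega>. 1 + \<bar>Y \<omega> s\<bar> powr q"])
      show "integrable P (\<lambda>\<omega>. 1 + \<bar>Y \<omega> s\<bar> powr q)" using iq by simp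
      show "(\<lambda>\<omega>. Y \<omega> s) \<in> borel_measurable P" by (rule Ym)
      show "AE \<omega> in P. norm (Y \<omega> s) \<le> norm (1 + \<bar>Y \<omega> s\<bar> powr q)"
      proof (intro AE_I2)
        fix \<omega>
        have "\<bar>Y \<omega> s\<bar> powr 1 \<le> 1 + \<bar>Y \<omega> s\<bar> powr q" using powr_le_1_plus[of 1 q "Y \<omega> s"] q by simp
        then show "norm (Y \<omega> s) \<le> norm (1 + \<bar>Y \<omega> s\<bar> powr q)" by (cases "Y \<omega> s = 0") auto
      qed
    qed
  qed
qed

theorem mainTheorem14:
  fixes P :: "'w measure" and S :: "'s measure"
    and p q :: real
    and X :: "'w \<Rightarrow> 's \<Rightarrow> real"
    and Xl :: "nat \<Rightarrow> 'w \<Rightarrow> 's \<Rightarrow> real"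
    and \<xi>c :: "nat \<Rightarrow> nat \<Rightarrow> 'w \<Rightarrow> 's \<Rightarrow> real"
    and Cost :: "nat \<Rightarrow> real"
    and N :: "nat \<Rightarrow> nat"
    and \<alpha> \<beta> \<gamma> C\<alpha> C\<beta> C\<gamma> A c1 c2 :: real
  assumes probP: "prob_space P"
    and sfS: "sigma_finite_measure S"
    and avgS: "approx_by_averaging S"
    and q: "2 \<le> q" and p: "1 \<le> p" "p \<le> q"
    and X_meas: "jointly_measurable P S X"
    and X_L1: "(\<integral>\<^sup>+ \<omega>. Lp_norm S p (X \<omega>) \<partial>P) < \<infinity>"
    and Xl_meas: "\<And>l. 1 \<le> l \<Longrightarrow> jointly_measurable P S (Xl l)"
    and Xl_Lqp: "\<And>l. 1 \<le> l \<Longrightarrow> Lqp_norm P S q p (Xl l) < \<infinity>"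
    and Xl_Lpq: "\<And>l. 1 \<le> l \<Longrightarrow> Lpq_norm P S p q (Xl l) < \<infinity>"
    and Xl0: "Xl 0 = (\<lambda>\<omega> s. 0)"
    and params: "0 < \<alpha>" "0 < \<beta>" "0 < \<gamma>" "0 < C\<alpha>" "0 < C\<beta>" "0 < C\<gamma>" "1 < A"
    and N_equiv: "0 < c1" "0 < c2"
      "\<And>l. 1 \<le> l \<Longrightarrow> c1 * A ^ l \<le> real (N l) \<and> real (N l) \<le> c2 * A ^ l"
    and bias: "\<And>l. 1 \<le> l \<Longrightarrow>
       Lp_norm S p (\<lambda>s. expec P X s - expec P (Xl l) s) \<le> ennreal (C\<alpha> * real (N l) powr (- \<alpha>))"
    and variance: "\<And>l. 1 \<le> l \<Longrightarrow>
       Lpq_norm P S p q (\<lambda>\<omega> s. Xl l \<omega> s - expec P (Xl l) s - (Xl (l - 1) \<omega> s - expec P (Xl (l - 1)) s))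
         \<le> ennreal (C\<beta> * real (N l) powr (- \<beta>))"
    and cost: "\<And>l. 1 \<le> l \<Longrightarrow> Cost l \<le> C\<gamma> * real (N l) powr \<gamma>"
    and copies_meas: "\<And>l j. 1 \<le> l \<Longrightarrow> jointly_measurable P S (\<xi>c l j)"
    and copies_indep: "\<And>l. 1 \<le> l \<Longrightarrow>
       prob_space.indep_vars P (\<lambda>_. PiM (space S) (\<lambda>_. borel))
         (\<lambda>j \<omega>. restrict (\<xi>c l j \<omega>) (space S)) UNIV"
    and copies_law: "\<And>l j. 1 \<le> l \<Longrightarrow>
       law P S (\<xi>c l j) = law P S (\<lambda>\<omega> s. Xl l \<omega> s - Xl (l - 1) \<omega> s)"
  shows "\<exists>K>0. \<forall>\<epsilon>::real. 0 < \<epsilon> \<and> \<epsilon> \<le> 1/2 \<longrightarrow>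
     (\<exists>L::nat. \<exists>M::nat \<Rightarrow> nat. 1 \<le> L \<and> (\<forall>l\<in>{1..L}. 1 \<le> M l) \<and>
        Lqp_norm P S q p (\<lambda>\<omega> s. expec P X s -
            (\<Sum>l=1..L. (1 / real (M l)) * (\<Sum>j=1..M l. \<xi>c l j \<omega> s))) < ennreal \<epsilon> \<and>
        (\<Sum>l=1..L. real (M l) * Cost l) \<le> K *
          (if \<beta> > \<gamma> / 2 then \<epsilon> powr (- \<gamma> / \<alpha>) + \<epsilon> powr (-2)
           else if \<beta> = \<gamma> / 2 then \<epsilon> powr (- \<gamma> / \<alpha>) + \<epsilon> powr (-2) * \<bar>log A \<epsilon>\<bar> ^ 3
           else \<epsilon> powr (- \<gamma> / \<alpha>) + \<epsilon> powr (-2 - (\<gamma> - 2 * \<beta>) / \<alpha>)))"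
proof -
  interpret prob_space P by (rule probP)
  have sfP: "sigma_finite_measure P" by unfold_locales
  have p0: "0 < p" and q0: "0 < q" using p q by auto
  have q1: "1 \<le> q" using q by simp
  define R where "R = mz_const q powr (1 / q)"
  have R0: "0 < R" using mz_const_pos[OF q] by (simp add: R_def)
  obtain K where K0: "0 < K" and Kp: "\<forall>\<epsilon>::real. 0 < \<epsilon> \<and> \<epsilon> \<le> 1/2 \<longrightarrow> (\<exists>L::nat. \<exists>M::nat \<Rightarrow> nat. 1 \<le> L \<and> (\<forall>l\<in>{1..L}. 1 \<le> M l) \<and>
      C\<alpha> * real (N L) powr (- \<alpha>) + (\<Sum>l=1..L. R * C\<beta> * real (M l) powr (- 1 / 2) * real (N l) powr (- \<beta>)) < \<epsilon> \<and>
      (\<Sum>l=1..L. real (M l) * Cost l) \<le> K *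
          (if \<beta> > \<gamma> / 2 then \<epsilon> powr (- \<gamma> / \<alpha>) + \<epsilon> powr (-2)
           else if \<beta> = \<gamma> / 2 then \<epsilon> powr (- \<gamma> / \<alpha>) + \<epsilon> powr (-2) * \<bar>log A \<epsilon>\<bar> ^ 3
           else \<epsilon> powr (- \<gamma> / \<alpha>) + \<epsilon> powr (-2 - (\<gamma> - 2 * \<beta>) / \<alpha>)))"
    using mlmc_arith[OF params N_equiv(1,2) N_equiv(3) cost R0] by blast
  have Xjm: "jointly_measurable P S (Xl l)" for l
    using Xl_meas[of l] Xl0 jm_zero by (cases "l = 0") auto
  have em[measurable]: "expec P (Xl l) \<in> borel_measurable S" for l by (rule jm_expec[OF sfP Xjm])
  have eXm[measurable]: "expec P X \<in> borel_measurable S" by (rule jm_expec[OF sfP X_meas])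
  have e0: "expec P (Xl 0) = (\<lambda>s. 0)" using Xl0 by (simp add: expec_def fun_eq_iff)
  have AEint: "AE s in S. integrable P (\<lambda>\<omega>. Xl l \<omega> s)" for l
  proof (cases "l = 0")
    case True then show ?thesis using Xl0 by simp
  next
    case False
    then show ?thesis using AE_integrable_of_Lpq[OF probP p(1) q1 Xjm Xl_Lpq[of l]] by simp
  qed
  show ?thesis
  proof (intro exI[of _ K] conjI K0 allI impI)
    fix \<epsilon> :: real
    assume e: "0 < \<epsilon> \<and> \<epsilon> \<le> 1 / 2"
    obtain L M where L1: "1 \<le> L" and M1: "\<forall>l\<in>{1..L}. 1 \<le> M l"
      and err: "C\<alpha> * real (N L) powr (- \<alpha>) + (\<Sum>l=1..L. R * C\<beta> * real (M l) powr (- 1 / 2) * real (N l) powr (- \<beta>)) < \<epsilon>"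
      and cst: "(\<Sum>l=1..L. real (M l) * Cost l) \<le> K *
          (if \<beta> > \<gamma> / 2 then \<epsilon> powr (- \<gamma> / \<alpha>) + \<epsilon> powr (-2)
           else if \<beta> = \<gamma> / 2 then \<epsilon> powr (- \<gamma> / \<alpha>) + \<epsilon> powr (-2) * \<bar>log A \<epsilon>\<bar> ^ 3
           else \<epsilon> powr (- \<gamma> / \<alpha>) + \<epsilon> powr (-2 - (\<gamma> - 2 * \<beta>) / \<alpha>))"
      using Kp e by blast
    define m where "m l s = expec P (Xl l) s - expec P (Xl (l - 1)) s" for l s
    define Y where "Y l = (\<lambda>\<omega> s. Xl l \<omega> s - Xl (l - 1) \<omega> s)" for l
    define Z where "Z l \<omega> s = (1 / real (M l)) * (\<Sum>j=1..M l. \<xi>c l j \<omega> s - m l s)" for l \<omega> s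
    define b where "b s = expec P X s - expec P (Xl L) s" for s
    have mm[measurable]: "m l \<in> borel_measurable S" for l unfolding m_def by measurable
    have bm[measurable]: "b \<in> borel_measurable S" unfolding b_def by measurable
    have Zjm: "jointly_measurable P S (Z l)" if l: "l \<in> {1..L}" for l
    proof -
      have [measurable]: "(\<lambda>x. \<xi>c l j (fst x) (snd x)) \<in> borel_measurable (P \<Otimes>\<^sub>M S)" for j
        using jm_case[OF copies_meas[of l j]] l by simp
      have "(\<lambda>x. Z l (fst x) (snd x)) \<in> borel_measurable (P \<Otimes>\<^sub>M S)" unfolding Z_def by measurable
      then show ?thesis unfolding jointly_measurable_def by (simp add: case_prod_beta')
    qed
    have decomp: "expec P X s - (\<Sum>l=1..L. (1 / real (M l)) * (\<Sum>j=1..M l. \<xi>c l j \<omega> s)) = b s - (\<Sum>l=1..L. Z l \<omega> s)" for \<omega> s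
    proof -
      have Zl: "Z l \<omega> s = (1 / real (M l)) * (\<Sum>j=1..M l. \<xi>c l j \<omega> s) - m l s" if l: "l \<in> {1..L}" for l
      proof -
        have "1 \<le> M l" using M1 l by blast
        then have Mpos: "0 < real (M l)" by simp
        have "(\<Sum>j=1..M l. \<xi>c l j \<omega> s - m l s) = (\<Sum>j=1..M l. \<xi>c l j \<omega> s) - real (M l) * m l s"
          by (simp add: sum_subtractf)
        then show ?thesis using Mpos by (simp add: Z_def field_simps)
      qed
      have "(\<Sum>l=1..L. Z l \<omega> s) = (\<Sum>l=1..L. (1 / real (M l)) * (\<Sum>j=1..M l. \<xi>c l j \<omega> s)) - (\<Sum>l=1..L. m l s)"
        by (simp add: Zl sum_subtractf)
      moreover have "(\<Sum>l=1..L. m l s) = expec P (Xl L) s"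
        using tel_sum[of "\<lambda>l. expec P (Xl l) s" L] e0 by (simp add: m_def)
      ultimately show ?thesis by (simp add: b_def)
    qed
    have Eeq: "(\<lambda>\<omega> s. expec P X s - (\<Sum>l=1..L. (1 / real (M l)) * (\<Sum>j=1..M l. \<xi>c l j \<omega> s)))
        = (\<lambda>\<omega> s. b s - (\<Sum>l=1..L. Z l \<omega> s))"
      using decomp by (simp add: fun_eq_iff)
    have tri: "Lp_norm S p (\<lambda>s. b s - (\<Sum>l=1..L. Z l \<omega> s)) \<le> Lp_norm S p b + (\<Sum>l=1..L. Lp_norm S p (Z l \<omega>))"
      if \<omega>: "\<omega> \<in> space P" for \<omega>
    proof -
      have Zsec[measurable]: "Z l \<omega> \<in> borel_measurable S" if "l \<in> {1..L}" for l
        using jm_sec[OF Zjm[OF that] \<omega>] .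
      have "Lp_norm S p (\<lambda>s. b s - (\<Sum>l=1..L. Z l \<omega> s)) = enorm S p (\<lambda>s. ennreal \<bar>b s - (\<Sum>l=1..L. Z l \<omega> s)\<bar>)"
        by (simp add: Lp_norm_enorm)
      also have "\<dots> \<le> enorm S p (\<lambda>s. ennreal \<bar>b s\<bar> + (\<Sum>l=1..L. ennreal \<bar>Z l \<omega> s\<bar>))"
      proof (rule enorm_mono_AE[OF AE_I2 p0])
        fix s
        have "\<bar>b s - (\<Sum>l=1..L. Z l \<omega> s)\<bar> \<le> \<bar>b s\<bar> + (\<Sum>l=1..L. \<bar>Z l \<omega> s\<bar>)"
          using abs_triangle_ineq4[of "b s" "\<Sum>l=1..L. Z l \<omega> s"] sum_abs[of "\<lambda>l. Z l \<omega> s" "{1..L}"] by linarith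
        then have "ennreal \<bar>b s - (\<Sum>l=1..L. Z l \<omega> s)\<bar> \<le> ennreal (\<bar>b s\<bar> + (\<Sum>l=1..L. \<bar>Z l \<omega> s\<bar>))"
          by (rule ennreal_leI)
        also have "\<dots> = ennreal \<bar>b s\<bar> + (\<Sum>l=1..L. ennreal \<bar>Z l \<omega> s\<bar>)"
          by (simp add: ennreal_plus sum_ennreal sum_nonneg)
        finally show "ennreal \<bar>b s - (\<Sum>l=1..L. Z l \<omega> s)\<bar> \<le> ennreal \<bar>b s\<bar> + (\<Sum>l=1..L. ennreal \<bar>Z l \<omega> s\<bar>)" .
      qed
      also have "\<dots> \<le> enorm S p (\<lambda>s. ennreal \<bar>b s\<bar>) + enorm S p (\<lambda>s. \<Sum>l=1..L. ennreal \<bar>Z l \<omega> s\<bar>)"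
        by (rule minkowski_enorm[OF p(1)]) measurable
      also have "enorm S p (\<lambda>s. \<Sum>l=1..L. ennreal \<bar>Z l \<omega> s\<bar>) \<le> (\<Sum>l=1..L. enorm S p (\<lambda>s. ennreal \<bar>Z l \<omega> s\<bar>))"
        by (rule minkowski_enorm_sum[OF p(1)]) measurable
      finally show ?thesis by (simp add: Lp_norm_enorm add_left_mono)
    qed
    have Lpm: "(\<lambda>\<omega>. Lp_norm S p (Z l \<omega>)) \<in> borel_measurable P" if "l \<in> {1..L}" for l
      by (rule Lp_norm_meas[OF sfS Zjm[OF that]])
    have lev: "Lqp_norm P S q p (Z l) \<le> ennreal (R * C\<beta> * real (M l) powr (- 1 / 2) * real (N l) powr (- \<beta>))"
      if l: "l \<in> {1..L}" for l
    proof -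
      have l1: "1 \<le> l" using l by simp
      have Yj: "jointly_measurable P S (Y l)"
      proof -
        have [measurable]: "(\<lambda>x. Xl k (fst x) (snd x)) \<in> borel_measurable (P \<Otimes>\<^sub>M S)" for k
          using jm_case[OF Xjm] .
        have "(\<lambda>x. Y l (fst x) (snd x)) \<in> borel_measurable (P \<Otimes>\<^sub>M S)" unfolding Y_def by measurable
        then show ?thesis unfolding jointly_measurable_def by (simp add: case_prod_beta')
      qed
      have good: "AE s in S. integrable P (\<lambda>\<omega>. Y l \<omega> s) \<and> (\<integral>\<omega>. Y l \<omega> s \<partial>P) = m l s"
        using AEint[of l] AEint[of "l - 1"]
      proof eventually_elim
        case (elim s)
        then show ?case by (simp add: Y_def m_def expec_def)
      qed
      have "Lqp_norm P S q p (Z l) \<le> ennreal (mz_const q powr (1/q) * real (M l) powr (-1/2)) * Lpq_norm P S p q (\<lambda>\<omega> s. Y l \<omega> s - m l s)"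
        unfolding Z_def
        by (rule level_bound[OF probP sfS q p Yj mm copies_meas[OF l1] copies_indep[OF l1] _ good])
           (use copies_law[OF l1] M1 l in \<open>auto simp: Y_def\<close>)
      also have "Lpq_norm P S p q (\<lambda>\<omega> s. Y l \<omega> s - m l s)
          = Lpq_norm P S p q (\<lambda>\<omega> s. Xl l \<omega> s - expec P (Xl l) s - (Xl (l - 1) \<omega> s - expec P (Xl (l - 1)) s))"
        by (simp add: Y_def m_def algebra_simps)
      also have "\<dots> \<le> ennreal (C\<beta> * real (N l) powr (- \<beta>))" by (rule variance[OF l1])
      finally have "Lqp_norm P S q p (Z l) \<le> ennreal (mz_const q powr (1/q) * real (M l) powr (-1/2)) * ennreal (C\<beta> * real (N l) powr (- \<beta>))"
        by (simp add: mult_left_mono)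
      also have "\<dots> = ennreal (R * C\<beta> * real (M l) powr (- 1 / 2) * real (N l) powr (- \<beta>))"
        using params by (simp add: R_def ennreal_mult[symmetric] mult_ac)
      finally show ?thesis .
    qed
    have errb: "Lqp_norm P S q p (\<lambda>\<omega> s. expec P X s - (\<Sum>l=1..L. (1 / real (M l)) * (\<Sum>j=1..M l. \<xi>c l j \<omega> s)))
        \<le> ennreal (C\<alpha> * real (N L) powr (- \<alpha>) + (\<Sum>l=1..L. R * C\<beta> * real (M l) powr (- 1 / 2) * real (N l) powr (- \<beta>)))"
    proof -
      have "Lqp_norm P S q p (\<lambda>\<omega> s. expec P X s - (\<Sum>l=1..L. (1 / real (M l)) * (\<Sum>j=1..M l. \<xi>c l j \<omega> s)))
          = enorm P q (\<lambda>\<omega>. Lp_norm S p (\<lambda>s. b s - (\<Sum>l=1..L. Z l \<omega> s)))"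
        unfolding Eeq using p0 q0 by (simp add: Lqp_norm_enorm)
      also have "\<dots> \<le> enorm P q (\<lambda>\<omega>. Lp_norm S p b + (\<Sum>l=1..L. Lp_norm S p (Z l \<omega>)))"
        by (rule enorm_mono_AE[OF AE_I2[OF tri] q0])
      also have "\<dots> \<le> enorm P q (\<lambda>\<omega>. Lp_norm S p b) + enorm P q (\<lambda>\<omega>. \<Sum>l=1..L. Lp_norm S p (Z l \<omega>))"
        by (rule minkowski_enorm[OF q1]) (use Lpm in \<open>auto intro!: borel_measurable_sum\<close>)
      also have "enorm P q (\<lambda>\<omega>. \<Sum>l=1..L. Lp_norm S p (Z l \<omega>)) \<le> (\<Sum>l=1..L. enorm P q (\<lambda>\<omega>. Lp_norm S p (Z l \<omega>)))"
        by (rule minkowski_enorm_sum[OF q1 Lpm])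
      also have "enorm P q (\<lambda>\<omega>. Lp_norm S p b) = Lp_norm S p b" using q0 by (rule enorm_const)
      also have "Lp_norm S p b \<le> ennreal (C\<alpha> * real (N L) powr (- \<alpha>))"
        using bias[OF L1] by (simp add: b_def[abs_def])
      also have "(\<Sum>l=1..L. enorm P q (\<lambda>\<omega>. Lp_norm S p (Z l \<omega>))) \<le> (\<Sum>l=1..L. ennreal (R * C\<beta> * real (M l) powr (- 1 / 2) * real (N l) powr (- \<beta>)))"
      proof (intro sum_mono)
        fix l assume l: "l \<in> {1..L}"
        have "enorm P q (\<lambda>\<omega>. Lp_norm S p (Z l \<omega>)) = Lqp_norm P S q p (Z l)" using p0 q0 by (simp add: Lqp_norm_enorm)
        then show "enorm P q (\<lambda>\<omega>. Lp_norm S p (Z l \<omega>)) \<le> ennreal (R * C\<beta> * real (M l) powr (- 1 / 2) * real (N l) powr (- \<beta>))"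
          using lev[OF l] by simp
      qed
      also have "ennreal (C\<alpha> * real (N L) powr (- \<alpha>)) + (\<Sum>l=1..L. ennreal (R * C\<beta> * real (M l) powr (- 1 / 2) * real (N l) powr (- \<beta>)))
          = ennreal (C\<alpha> * real (N L) powr (- \<alpha>) + (\<Sum>l=1..L. R * C\<beta> * real (M l) powr (- 1 / 2) * real (N l) powr (- \<beta>)))"
        using params R0 by (simp add: sum_ennreal ennreal_plus sum_nonneg)
      finally show ?thesis by (simp add: add_mono)
    qed
    show "\<exists>L M. 1 \<le> L \<and> (\<forall>l\<in>{1..L}. 1 \<le> M l) \<and>
        Lqp_norm P S q p (\<lambda>\<omega> s. expec P X s - (\<Sum>l=1..L. (1 / real (M l)) * (\<Sum>j=1..M l. \<xi>c l j \<omega> s))) < ennreal \<epsilon> \<and>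
        (\<Sum>l=1..L. real (M l) * Cost l) \<le> K *
          (if \<beta> > \<gamma> / 2 then \<epsilon> powr (- \<gamma> / \<alpha>) + \<epsilon> powr (-2)
           else if \<beta> = \<gamma> / 2 then \<epsilon> powr (- \<gamma> / \<alpha>) + \<epsilon> powr (-2) * \<bar>log A \<epsilon>\<bar> ^ 3
           else \<epsilon> powr (- \<gamma> / \<alpha>) + \<epsilon> powr (-2 - (\<gamma> - 2 * \<beta>) / \<alpha>))"
    proof (intro exI conjI)
      show "1 \<le> L" by (rule L1)
      show "\<forall>l\<in>{1..L}. 1 \<le> M l" by (rule M1)
      show "Lqp_norm P S q p (\<lambda>\<omega> s. expec P X s - (\<Sum>l=1..L. (1 / real (M l)) * (\<Sum>j=1..M l. \<xi>c l j \<omega> s))) < ennreal \<epsilon>"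
        using errb ennreal_lessI[OF _ err] e by (meson order.strict_trans1)
      show "(\<Sum>l=1..L. real (M l) * Cost l) \<le> K *
          (if \<beta> > \<gamma> / 2 then \<epsilon> powr (- \<gamma> / \<alpha>) + \<epsilon> powr (-2)
           else if \<beta> = \<gamma> / 2 then \<epsilon> powr (- \<gamma> / \<alpha>) + \<epsilon> powr (-2) * \<bar>log A \<epsilon>\<bar> ^ 3
           else \<epsilon> powr (- \<gamma> / \<alpha>) + \<epsilon> powr (-2 - (\<gamma> - 2 * \<beta>) / \<alpha>))" by (rule cst)
    qed
  qed
qed

end
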